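(* For any measurable $f:\mathbb R^p\times[K]\to\mathbb R$, any joint distribution $\mathbb P$ of $(\boldsymbol X,S,Y)$ and any $\sigma>0$, the randomized predictor $\hat\Pi(f)$ defined in the context satisfies $$\mathrm{Law}\big(\hat\Pi(f)(\boldsymbol X,S)\mid S=s\big)=\mathrm{Law}\big(\hat\Pi(f)(\boldsymbol X,S)\mid S=s'\big)\qquad\forall s,s'\in[K],$$ where the law involves all the randomness in $\hat\Pi(f)(\boldsymbol X,S)$ (the auxiliary samples, the noises and $(\boldsymbol X,S)$).
   Context: Let $(\boldsymbol X,S,Y)\sim\mathbb P$ on $\mathbb R^p\times[K]\times\mathbb R$ with $\mathbb P(S=s)>0$ for all $s$, and fix $\boldsymbol w\in\Delta^{K-1}$. For each $s\in[K]$, let $\boldsymbol X^s_1,\dots,\boldsymbol X^s_{2N_s}$ be i.i.d. from $\mathrm{Law}(\boldsymbol X\mid S=s)$, independent of $(\boldsymbol X,S,Y)$ and of all other variables. Let $\zeta$ and $(\zeta^s_i)_{s\in[K],i\le2N_s}$ be i.i.d. uniform on $[-\sigma,\sigma]$, and $(U^s)_{s\in[K]}$ i.i.d. uniform on $[0,1]$, all mutually independent and independent of everything else. Set $\tilde f^s_i=f(\boldsymbol X^s_i,s)+\zeta^s_i$ and $\tilde f(\boldsymbol x,s)=f(\boldsymbol x,s)+\zeta$. Define for $t\in\mathbb R$: $\hat F_{1,s}(t)=\frac1{N_s+1}\big(\sum_{i=1}^{N_s}\mathbf 1\{\tilde f^s_i<t\}+U^s(1+\sum_{i=1}^{N_s}\mathbf1\{\tilde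 f^s_i=t\})\big)$ and $\hat F_{2,s}(t)=\frac1{N_s}\sum_{i=N_s+1}^{2N_s}\mathbf1\{\tilde f^s_i\le t\}$, with generalized inverse $\hat F_{2,s}^{-1}(u)=\inf\{x:\hat F_{2,s}(x)\ge u\}$. Then $\hat\Pi(f)(\boldsymbol x,s)=\sum_{s'=1}^Kw_{s'}\hat F^{-1}_{2,s'}\circ\hat F_{1,s}\circ\tilde f(\boldsymbol x,s)$. *)

theory Defs
  imports "HOL-Probability.Probability"
begin

text \<open>Joint law P of (X,S,Y) lives on (real^'p) \<times> nat \<times> real.
  Component projections.\<close>

definition Sof :: "('x \<times> nat \<times> real) \<Rightarrow> nat" where
  "Sof z = fst (snd z)"

definition unif :: "real \<Rightarrow> real \<Rightarrow> real measure" where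
  "unif a b = uniform_measure lborel {a..b}"

definition cond_law :: "'a measure \<Rightarrow> 'a set \<Rightarrow> ('a \<Rightarrow> 'b::topological_space) \<Rightarrow> 'b measure" where
  "cond_law M E Z = distr (uniform_measure M E) borel Z"

definition lawX_given_S :: "(('x::topological_space) \<times> nat \<times> real) measure \<Rightarrow> nat \<Rightarrow> 'x measure" where
  "lawX_given_S P s = cond_law P {z \<in> space P. Sof z = s} fst"

definition samp_idx :: "nat \<Rightarrow> (nat \<Rightarrow> nat) \<Rightarrow> (nat \<times> nat) set" where
  "samp_idx K N = {(s,i). s \<in> {1..K} \<and> i \<in> {1..2 * N s}}"

text \<open>The underlying probability space: (X,S,Y) ~ P, independent auxiliary samples
  X^s_i ~ Law(X | S = s), zeta ~ U[-sigma,sigma], zeta^s_i ~ U[-sigma,sigma], U^s ~ U[0,1],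
  all mutually independent (product measure).\<close>
definition Omega ::
  "(('x::topological_space) \<times> nat \<times> real) measure \<Rightarrow> nat \<Rightarrow> (nat \<Rightarrow> nat) \<Rightarrow> real \<Rightarrow>
   (('x \<times> nat \<times> real) \<times> (nat \<times> nat \<Rightarrow> 'x) \<times> real \<times> (nat \<times> nat \<Rightarrow> real) \<times> (nat \<Rightarrow> real)) measure" where
  "Omega P K N \<sigma> =
     P \<Otimes>\<^sub>M (PiM (samp_idx K N) (\<lambda>(s,i). lawX_given_S P s)) \<Otimes>\<^sub>M unif (-\<sigma>) \<sigma>
       \<Otimes>\<^sub>M (PiM (samp_idx K N) (\<lambda>_. unif (-\<sigma>) \<sigma>)) \<Otimes>\<^sub>M (PiM {1..K} (\<lambda>_. unif 0 1))"

text \<open>hat F_{1,s}(t), with ft i = tilde f^s_i and u = U^s.\<close>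
definition F1hat :: "nat \<Rightarrow> (nat \<Rightarrow> real) \<Rightarrow> real \<Rightarrow> real \<Rightarrow> real" where
  "F1hat n ft u t =
     ((\<Sum>i\<in>{1..n}. if ft i < t then 1 else 0)
       + u * (1 + (\<Sum>i\<in>{1..n}. if ft i = t then 1 else 0))) / (real n + 1)"

definition F2hat :: "nat \<Rightarrow> (nat \<Rightarrow> real) \<Rightarrow> real \<Rightarrow> real" where
  "F2hat n ft t = (\<Sum>i\<in>{n+1..2*n}. if ft i \<le> t then 1 else 0) / real n"

definition geninv :: "(real \<Rightarrow> real) \<Rightarrow> real \<Rightarrow> real" where
  "geninv F u = Inf {x. u \<le> F x}"

definition Pihat ::
  "('x \<Rightarrow> nat \<Rightarrow> real) \<Rightarrow> (nat \<Rightarrow> real) \<Rightarrow> nat \<Rightarrow> (nat \<Rightarrow> nat) \<Rightarrow>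
   (('x \<times> nat \<times> real) \<times> (nat \<times> nat \<Rightarrow> 'x) \<times> real \<times> (nat \<times> nat \<Rightarrow> real) \<times> (nat \<Rightarrow> real)) \<Rightarrow> real" where
  "Pihat f w K N \<omega> =
     (case \<omega> of (z, xs, \<zeta>, \<zeta>s, us) \<Rightarrow>
       let x = fst z; s = Sof z;
           ft = (\<lambda>s' i. f (xs (s', i)) s' + \<zeta>s (s', i))
       in (\<Sum>s'\<in>{1..K}. w s' * geninv (F2hat (N s') (ft s'))
                                  (F1hat (N s) (ft s) (us s) (f x s + \<zeta>))))"

end

theory Submission
  imports Defs "HOL-Probability.Probability"
begin

definition clamp :: "real \<Rightarrow> real \<Rightarrow> real" where
  "clamp c x = min c (max 0 x)"

lemma clamp_add:
  assumes "S \<ge> 0" "c \<ge> 0"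
  shows "clamp S T + clamp c (T - S) = clamp (S + c) T"
  using assms unfolding clamp_def by (auto simp: min_def max_def)

lemma clamp_tiling:
  fixes V :: "real set"
  assumes "finite V" "\<forall>v\<in>V. c v \<ge> 0"
  shows "(\<Sum>v\<in>V. clamp (c v) (T - (\<Sum>v'\<in>{v'\<in>V. v' < v}. c v'))) = clamp (sum c V) T"
  using assms
proof (induction V rule: finite_linorder_max_induct)
  case empty
  then show ?case by (simp add: clamp_def)
next
  case (insert b A)
  have bA: "b \<notin> A" using insert by auto
  have eq1: "\<And>v. v \<in> A \<Longrightarrow> {v'\<in>insert b A. v' < v} = {v'\<in>A. v' < v}"
    using insert by auto
  have eq2: "{v'\<in>insert b A. v' < b} = A" using insert by auto
  have eq2': "{v'. (v' = b \<or> v' \<in> A) \<and> v' < b} = A" using insert by auto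
  have "(\<Sum>v\<in>insert b A. clamp (c v) (T - (\<Sum>v'\<in>{v'\<in>insert b A. v' < v}. c v')))
      = clamp (c b) (T - sum c A) + (\<Sum>v\<in>A. clamp (c v) (T - (\<Sum>v'\<in>{v'\<in>A. v' < v}. c v')))"
  proof -
    have "(\<Sum>v\<in>A. clamp (c v) (T - (\<Sum>v'\<in>{v'\<in>insert b A. v' < v}. c v'))) =
          (\<Sum>v\<in>A. clamp (c v) (T - (\<Sum>v'\<in>{v'\<in>A. v' < v}. c v')))"
      by (intro sum.cong refl) (simp only: eq1)
    then show ?thesis using insert(1) bA by (simp add: eq2 eq2')
  qed
  also have "\<dots> = clamp (c b) (T - sum c A) + clamp (sum c A) T"
    using insert by simp
  also have "\<dots> = clamp (sum c A + c b) T"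
    using clamp_add[of "sum c A" "c b" T] insert by (simp add: sum_nonneg)
  finally show ?case using insert bA by (simp add: add.commute)
qed

definition rk_lt :: "(nat \<Rightarrow> real) \<Rightarrow> nat \<Rightarrow> nat \<Rightarrow> nat" where
  "rk_lt Y n j = card {i\<in>{0..n}. Y i < Y j}"
definition rk_eq :: "(nat \<Rightarrow> real) \<Rightarrow> nat \<Rightarrow> nat \<Rightarrow> nat" where
  "rk_eq Y n j = card {i\<in>{0..n}. Y i = Y j}"

lemma card_by_values:
  fixes Y :: "nat \<Rightarrow> real"
  assumes "finite X"
  shows "real (card X) = (\<Sum>v\<in>Y ` X. real (card {i\<in>X. Y i = v}))"
proof -
  have "real (card X) = (\<Sum>i\<in>X. 1)" by simp
  also have "\<dots> = (\<Sum>v\<in>Y ` X. \<Sum>i\<in>{i\<in>X. Y i = v}. 1)"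
    using sum.image_gen[OF assms, of "\<lambda>_. (1::real)" Y] by simp
  finally show ?thesis by simp
qed

lemma rank_tiling:
  fixes Y :: "nat \<Rightarrow> real"
  shows "(\<Sum>j\<in>{0..n}. clamp 1 ((T - real (rk_lt Y n j)) / real (rk_eq Y n j))) = clamp (real n + 1) T"
proof -
  define V where "V = Y ` {0..n}"
  define cnt where "cnt v = real (card {i\<in>{0..n}. Y i = v})" for v
  define g where "g v = clamp 1 ((T - real (card {i\<in>{0..n}. Y i < v})) / cnt v)" for v
  have cntpos: "cnt v > 0" if "v \<in> V" for v
    using that unfolding cnt_def V_def by (auto simp: card_gt_0_iff)
  have below: "real (card {i\<in>{0..n}. Y i < v}) = (\<Sum>v'\<in>{v'\<in>V. v' < v}. cnt v')" for v
  proof -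
    have "real (card {i\<in>{0..n}. Y i < v}) = (\<Sum>v'\<in>Y ` {i\<in>{0..n}. Y i < v}. real (card {i\<in>{i\<in>{0..n}. Y i < v}. Y i = v'}))"
      by (rule card_by_values) simp
    also have "Y ` {i\<in>{0..n}. Y i < v} = {v'\<in>V. v' < v}" unfolding V_def by auto
    also have "(\<Sum>v'\<in>{v'\<in>V. v' < v}. real (card {i\<in>{i\<in>{0..n}. Y i < v}. Y i = v'})) = (\<Sum>v'\<in>{v'\<in>V. v' < v}. cnt v')"
      unfolding cnt_def by (intro sum.cong refl arg_cong[where f="\<lambda>x. real (card x)"]) auto
    finally show ?thesis .
  qed
  have total: "sum cnt V = real n + 1"
  proof -
    have "real (card {0..n}) = (\<Sum>v\<in>V. real (card {i\<in>{0..n}. Y i = v}))"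
      unfolding V_def by (rule card_by_values) simp
    then show ?thesis unfolding cnt_def by simp
  qed
  have "(\<Sum>j\<in>{0..n}. clamp 1 ((T - real (rk_lt Y n j)) / real (rk_eq Y n j))) = (\<Sum>j\<in>{0..n}. g (Y j))"
    unfolding g_def cnt_def rk_lt_def rk_eq_def by simp
  also have "\<dots> = (\<Sum>v\<in>V. \<Sum>j\<in>{j\<in>{0..n}. Y j = v}. g (Y j))"
    unfolding V_def by (rule sum.image_gen) simp
  also have "\<dots> = (\<Sum>v\<in>V. cnt v * g v)"
    unfolding cnt_def by (intro sum.cong refl) simp
  also have "\<dots> = (\<Sum>v\<in>V. clamp (cnt v) (T - (\<Sum>v'\<in>{v'\<in>V. v' < v}. cnt v')))"
  proof (intro sum.cong refl)
    fix v assume v: "v \<in> V"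
    have c: "cnt v > 0" using cntpos[OF v] .
    show "cnt v * g v = clamp (cnt v) (T - (\<Sum>v'\<in>{v'\<in>V. v' < v}. cnt v'))"
      unfolding g_def below[symmetric] clamp_def using c
      by (auto simp: min_def max_def field_simps)
  qed
  also have "\<dots> = clamp (sum cnt V) T"
    by (rule clamp_tiling) (auto simp: V_def cnt_def)
  finally show ?thesis using total by simp
qed

definition rkA :: "(nat \<Rightarrow> real) \<Rightarrow> nat \<Rightarrow> nat \<Rightarrow> real \<Rightarrow> real" where
  "rkA Y n j v = (real (rk_lt Y n j) + v * real (rk_eq Y n j)) / (real n + 1)"

lemma rk_eq_pos: "j \<in> {0..n} \<Longrightarrow> rk_eq Y n j > 0"
  unfolding rk_eq_def by (auto simp: card_gt_0_iff)

lemma space_unif[simp]: "space (unif a b) = UNIV"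
  by (simp add: unif_def)
lemma sets_unif[simp, measurable_cong]: "sets (unif a b) = sets borel"
  by (simp add: unif_def)

lemma prob_space_unif: "a < b \<Longrightarrow> prob_space (unif a b)"
  unfolding unif_def by (rule prob_space_uniform_measure) auto

lemma emeasure_unif01_greater: "emeasure (unif 0 1) {c<..} = ennreal (1 - clamp 1 c)"
proof -
  have "emeasure (unif 0 1) {c<..} = emeasure lborel ({0..1} \<inter> {c<..}) / emeasure lborel {0..(1::real)}"
    unfolding unif_def by (rule emeasure_uniform_measure) auto
  also have "emeasure lborel {0..(1::real)} = 1" by simp
  also have "emeasure lborel ({0..1} \<inter> {c<..}) = ennreal (1 - clamp 1 c)"
  proof (cases "c < 0")
    case True
    then have "{0..1} \<inter> {c<..} = {0..(1::real)}" by auto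
    then show ?thesis using True by (simp add: clamp_def)
  next
    case False
    show ?thesis
    proof (cases "c < 1")
      case True
      then have "{0..1} \<inter> {c<..} = {c<..(1::real)}" using False by auto
      then show ?thesis using True False by (simp add: clamp_def)
    next
      case False2: False
      then have "{0..1} \<inter> {c<..} = ({}::real set)" by auto
      then show ?thesis using False2 False by (simp add: clamp_def)
    qed
  qed
  finally show ?thesis by (simp add: divide_ennreal_def)
qed

lemma rkA_greater_set:
  assumes "j \<in> {0..n}"
  shows "{v. x < rkA Y n j v} = {(x * (real n + 1) - real (rk_lt Y n j)) / real (rk_eq Y n j) <..}"
proof -
  have m: "real (rk_eq Y n j) > 0" using rk_eq_pos[OF assms] by simp
  show ?thesis
    unfolding rkA_def using m
    by (auto simp: field_simps)
qed

lemma rkA_measurable[measurable]: "rkA Y n j \<in> borel_measurable borel"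
  unfolding rkA_def by measurable

lemma nu_lemma:
  assumes B: "B \<in> sets borel"
  shows "(\<Sum>j\<in>{0..n}. emeasure (unif 0 1) {v. rkA Y n j v \<in> B}) = (real n + 1) * emeasure (unif 0 1) B"
proof -
  let ?C = "count_space {0..n} :: nat measure"
  let ?U = "unif 0 (1::real)"
  interpret U: prob_space ?U by (rule prob_space_unif) simp
  have sfC: "sigma_finite_measure ?C" by (rule sigma_finite_measure_count_space_finite) simp
  interpret C: sigma_finite_measure ?C by (rule sfC)
  interpret P: pair_sigma_finite ?C ?U by unfold_locales
  define \<nu> where "\<nu> = distr (?C \<Otimes>\<^sub>M ?U) borel (\<lambda>(j,v). rkA Y n j v)"
  have meas: "(\<lambda>(j,v). rkA Y n j v) \<in> borel_measurable (?C \<Otimes>\<^sub>M ?U)"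
  proof -
    have "(\<lambda>p. (\<lambda>j p. rkA Y n j (snd p)) (fst p) p) \<in> borel_measurable (?C \<Otimes>\<^sub>M ?U)"
    proof (rule measurable_compose_countable)
      fix j show "(\<lambda>p. rkA Y n j (snd p)) \<in> borel_measurable (?C \<Otimes>\<^sub>M ?U)" by measurable
    next
      have "(\<lambda>x. x) \<in> measurable ?C (count_space UNIV)" by simp
      then show "fst \<in> measurable (?C \<Otimes>\<^sub>M ?U) (count_space UNIV)"
        using measurable_compose[OF measurable_fst] by blast
    qed
    then show ?thesis by (simp add: case_prod_beta')
  qed
  have emnu: "emeasure \<nu> A = (\<Sum>j\<in>{0..n}. emeasure ?U {v. rkA Y n j v \<in> A})" if A: "A \<in> sets borel" for A
  proof -
    have "emeasure \<nu> A = emeasure (?C \<Otimes>\<^sub>M ?U) ((\<lambda>(j,v). rkA Y n j v) -` A \<inter> space (?C \<Otimes>\<^sub>M ?U))"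
      unfolding \<nu>_def using meas A by (simp add: emeasure_distr)
    also have "\<dots> = (\<integral>\<^sup>+ j. emeasure ?U (Pair j -` ((\<lambda>(j,v). rkA Y n j v) -` A \<inter> space (?C \<Otimes>\<^sub>M ?U))) \<partial>?C)"
      using meas A by (intro U.emeasure_pair_measure_alt) (auto intro: measurable_sets)
    also have "\<dots> = (\<Sum>j\<in>{0..n}. emeasure ?U (Pair j -` ((\<lambda>(j,v). rkA Y n j v) -` A \<inter> space (?C \<Otimes>\<^sub>M ?U))))"
      by (simp add: nn_integral_count_space_finite)
    also have "\<dots> = (\<Sum>j\<in>{0..n}. emeasure ?U {v. rkA Y n j v \<in> A})"
      by (intro sum.cong refl arg_cong[where f="emeasure ?U"]) (auto simp: space_pair_measure)
    finally show ?thesis .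
  qed
  have "\<nu> = scale_measure (real n + 1) ?U"
  proof (rule measure_eqI_lessThan)
    show "sets \<nu> = sets borel" by (simp add: \<nu>_def)
    show "sets (scale_measure (real n + 1) ?U) = sets borel" by simp
    fix x
    have "emeasure \<nu> {x<..} = (\<Sum>j\<in>{0..n}. emeasure ?U {v. x < rkA Y n j v})"
      by (simp add: emnu)
    also have "\<dots> = (\<Sum>j\<in>{0..n}. ennreal (1 - clamp 1 ((x * (real n + 1) - real (rk_lt Y n j)) / real (rk_eq Y n j))))"
      by (intro sum.cong refl) (simp add: rkA_greater_set emeasure_unif01_greater)
    also have "\<dots> = ennreal (\<Sum>j\<in>{0..n}. (1 - clamp 1 ((x * (real n + 1) - real (rk_lt Y n j)) / real (rk_eq Y n j))))"
      by (rule sum_ennreal) (auto simp: clamp_def)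
    also have "(\<Sum>j\<in>{0..n}. (1 - clamp 1 ((x * (real n + 1) - real (rk_lt Y n j)) / real (rk_eq Y n j))))
        = (real n + 1) - clamp (real n + 1) (x * (real n + 1))"
      by (simp add: sum_subtractf rank_tiling)
    also have "\<dots> = (real n + 1) * (1 - clamp 1 x)"
    proof -
      have "clamp (real n + 1) (x * (real n + 1)) = (real n + 1) * clamp 1 x"
        unfolding clamp_def by (cases "x \<le> 0"; cases "x \<le> 1") (auto simp: min_def max_def mult_le_cancel_right1 zero_le_mult_iff)
      then show ?thesis by (simp add: algebra_simps)
    qed
    also have "ennreal \<dots> = (real n + 1) * emeasure ?U {x<..}"
      by (simp add: emeasure_unif01_greater ennreal_mult clamp_def)
    finally have nueq: "emeasure \<nu> {x<..} = (real n + 1) * emeasure ?U {x<..}" .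
    then show "emeasure \<nu> {x<..} = emeasure (scale_measure (real n + 1) ?U) {x<..}"
      by simp
    have "emeasure ?U {x<..} < \<infinity>" by (simp add: emeasure_unif01_greater)
    then show "emeasure \<nu> {x<..} < \<infinity>"
      unfolding nueq by (simp add: ennreal_mult_less_top)
  qed
  then have "emeasure \<nu> B = (real n + 1) * emeasure ?U B" using B by simp
  then show ?thesis using emnu[OF B] by simp
qed

definition sw :: "nat \<Rightarrow> nat \<Rightarrow> nat" where
  "sw j i = (if i = 0 then j else if i = j then 0 else i)"

lemma sum_ind_card: "finite A \<Longrightarrow> (\<Sum>i\<in>A. if P i then 1 else (0::real)) = real (card {i\<in>A. P i})"
  by (simp add: sum.inter_filter[symmetric])

lemma bij_sw: "j \<le> n \<Longrightarrow> bij_betw (sw j) {1..n} ({0..n} - {j})"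
  unfolding bij_betw_def inj_on_def sw_def
  by (auto simp: image_iff split: if_splits)

lemma F1_swap:
  assumes j: "j \<le> n"
  shows "F1hat n (\<lambda>i. Y (sw j i)) u (Y j) = rkA Y n j u"
proof -
  have r: "(\<Sum>i\<in>{1..n}. g (sw j i)) = (\<Sum>k\<in>{0..n} - {j}. g k)" for g :: "nat \<Rightarrow> real"
    using sum.reindex_bij_betw[OF bij_sw[OF j], of g] by simp
  have jin: "j \<in> {0..n}" using j by simp
  have lt: "(\<Sum>i\<in>{1..n}. if Y (sw j i) < Y j then 1 else 0) = real (rk_lt Y n j)"
  proof -
    have "(\<Sum>i\<in>{1..n}. if Y (sw j i) < Y j then 1 else 0) = (\<Sum>k\<in>{0..n} - {j}. if Y k < Y j then 1 else (0::real))"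
      by (rule r)
    also have "\<dots> = (\<Sum>k\<in>{0..n}. if Y k < Y j then 1 else (0::real))"
      using sum.remove[OF _ jin, of "\<lambda>k. if Y k < Y j then 1 else (0::real)"] by simp
    finally show ?thesis unfolding rk_lt_def by (simp add: sum_ind_card)
  qed
  have eq: "1 + (\<Sum>i\<in>{1..n}. if Y (sw j i) = Y j then 1 else 0) = real (rk_eq Y n j)"
  proof -
    have "(\<Sum>i\<in>{1..n}. if Y (sw j i) = Y j then 1 else 0) = (\<Sum>k\<in>{0..n} - {j}. if Y k = Y j then 1 else (0::real))"
      by (rule r)
    moreover have "(\<Sum>k\<in>{0..n}. if Y k = Y j then 1 else (0::real)) = 1 + (\<Sum>k\<in>{0..n} - {j}. if Y k = Y j then 1 else (0::real))"
      using sum.remove[OF _ jin, of "\<lambda>k. if Y k = Y j then 1 else (0::real)"] by simp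
    ultimately show ?thesis unfolding rk_eq_def by (simp add: sum_ind_card)
  qed
  show ?thesis unfolding F1hat_def rkA_def using lt eq by simp
qed

lemma F2hat_mono: "a \<le> b \<Longrightarrow> F2hat m ft a \<le> F2hat m ft b"
  unfolding F2hat_def by (auto intro!: divide_right_mono sum_mono)

lemma F2hat_nonneg: "0 \<le> F2hat m ft t"
  unfolding F2hat_def by (auto intro!: divide_nonneg_nonneg sum_nonneg)

lemma F2hat_le1: "F2hat m ft t \<le> 1"
proof (cases "m = 0")
  case True then show ?thesis by (simp add: F2hat_def)
next
  case False
  have "(\<Sum>i\<in>{m+1..2*m}. if ft i \<le> t then 1 else (0::real)) \<le> (\<Sum>i\<in>{m+1..2*m}. 1)"
    by (rule sum_mono) simp
  also have "\<dots> = real m" by simp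
  finally show ?thesis unfolding F2hat_def using False by simp
qed

lemma geninv_char:
  assumes m: "m \<ge> 1" and u: "0 < u" "u \<le> 1"
  shows "geninv (F2hat m ft) u \<le> c \<longleftrightarrow> u \<le> F2hat m ft c"
proof -
  let ?F = "F2hat m ft"
  define D where "D = ft ` {m+1..2*m}"
  have finD: "finite D" and neD: "D \<noteq> {}" using m by (auto simp: D_def)
  define Ds where "Ds = {d\<in>D. u \<le> ?F d}"
  have maxin: "Max D \<in> Ds"
  proof -
    have "?F (Max D) = 1"
    proof -
      have "(\<Sum>i\<in>{m+1..2*m}. if ft i \<le> Max D then 1 else (0::real)) = (\<Sum>i\<in>{m+1..2*m}. 1)"
        by (intro sum.cong refl) (auto simp: D_def intro!: Max_ge finD)
      then show ?thesis unfolding F2hat_def using m by simp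
    qed
    then show ?thesis using u Max_in[OF finD neD] by (simp add: Ds_def)
  qed
  have finDs: "finite Ds" and neDs: "Ds \<noteq> {}" using finD maxin by (auto simp: Ds_def)
  define dstar where "dstar = Min Ds"
  have dsin: "dstar \<in> Ds" unfolding dstar_def using Min_in[OF finDs neDs] .
  have key: "u \<le> ?F x \<longleftrightarrow> dstar \<le> x" for x
  proof
    assume "dstar \<le> x"
    then have "?F dstar \<le> ?F x" by (rule F2hat_mono)
    then show "u \<le> ?F x" using dsin by (auto simp: Ds_def)
  next
    assume ux: "u \<le> ?F x"
    show "dstar \<le> x"
    proof (rule ccontr)
      assume "\<not> dstar \<le> x"
      then have xlt: "x < dstar" by simp
      define Dx where "Dx = {d\<in>D. d \<le> x}"
      have "Dx \<noteq> {}"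
      proof
        assume e: "Dx = {}"
        have "?F x = 0"
        proof -
          have "(\<Sum>i\<in>{m+1..2*m}. if ft i \<le> x then 1 else (0::real)) = 0"
            using e by (intro sum.neutral) (auto simp: Dx_def D_def)
          then show ?thesis by (simp add: F2hat_def)
        qed
        then show False using ux u by simp
      qed
      moreover have "finite Dx" using finD by (simp add: Dx_def)
      ultimately have dpin: "Max Dx \<in> Dx" by (rule Max_in[rotated])
      define d' where "d' = Max Dx"
      have "?F d' = ?F x"
      proof -
        have "(\<Sum>i\<in>{m+1..2*m}. if ft i \<le> d' then 1 else (0::real)) = (\<Sum>i\<in>{m+1..2*m}. if ft i \<le> x then 1 else (0::real))"
        proof (intro sum.cong refl)
          fix i assume i: "i \<in> {m+1..2*m}"
          have "ft i \<le> d' \<longleftrightarrow> ft i \<le> x"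
          proof
            assume "ft i \<le> d'" then show "ft i \<le> x" using dpin by (auto simp: d'_def Dx_def)
          next
            assume "ft i \<le> x"
            then have "ft i \<in> Dx" using i by (auto simp: Dx_def D_def)
            then show "ft i \<le> d'" unfolding d'_def using \<open>finite Dx\<close> by (rule Max_ge[rotated])
          qed
          then show "(if ft i \<le> d' then 1 else (0::real)) = (if ft i \<le> x then 1 else 0)" by simp
        qed
        then show ?thesis by (simp add: F2hat_def)
      qed
      then have "d' \<in> Ds" using ux dpin by (auto simp: Ds_def Dx_def d'_def)
      then have "dstar \<le> d'" unfolding dstar_def using finDs by (rule Min_le[rotated])
      moreover have "d' \<le> x" using dpin by (auto simp: Dx_def d'_def)
      ultimately show False using xlt by simp
    qed
  qed
  have "{x. u \<le> ?F x} = {dstar..}" using key by auto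
  then have "geninv ?F u = dstar" unfolding geninv_def by (simp add: cInf_atLeast)
  then show ?thesis using key by simp
qed

lemma geninv_le0: "u \<le> 0 \<Longrightarrow> geninv (F2hat m ft) u = Inf UNIV"
  unfolding geninv_def using F2hat_nonneg[of m ft]
  by (metis (mono_tags, lifting) UNIV_eq_I mem_Collect_eq order_trans)

lemma geninv_gt1: "1 < u \<Longrightarrow> geninv (F2hat m ft) u = Inf {}"
  unfolding geninv_def using F2hat_le1[of m ft]
  by (metis (mono_tags, lifting) Collect_empty_eq linorder_not_le order_trans)

lemma geninv_m0: "geninv (F2hat 0 ft) u = (if u \<le> 0 then Inf UNIV else Inf {})"
  unfolding geninv_def F2hat_def by simp

lemma F2hat_meas[measurable]:
  assumes [measurable]: "\<And>i. (\<lambda>x. g x i) \<in> borel_measurable M" "c \<in> borel_measurable M"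
  shows "(\<lambda>x. F2hat m (g x) (c x)) \<in> borel_measurable M"
  unfolding F2hat_def by measurable

lemma F1hat_meas[measurable]:
  assumes [measurable]: "\<And>i. (\<lambda>x. g x i) \<in> borel_measurable M" "c \<in> borel_measurable M" "u \<in> borel_measurable M"
  shows "(\<lambda>x. F1hat m (g x) (u x) (c x)) \<in> borel_measurable M"
  unfolding F1hat_def by measurable

lemma geninv_meas[measurable]:
  assumes g[measurable]: "\<And>i. (\<lambda>x. g x i) \<in> borel_measurable M" and h[measurable]: "h \<in> borel_measurable M"
  shows "(\<lambda>x. geninv (F2hat m (g x)) (h x)) \<in> borel_measurable M"
proof (cases "m = 0")
  case True
  then show ?thesis by (simp add: geninv_m0)
next
  case False
  then have m: "m \<ge> 1" by simp
  show ?thesis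
  proof (subst borel_measurable_iff_le, intro allI)
    fix c
    have "{x \<in> space M. geninv (F2hat m (g x)) (h x) \<le> c} =
      {x \<in> space M. (h x \<le> 0 \<and> Inf (UNIV::real set) \<le> c) \<or> (1 < h x \<and> Inf ({}::real set) \<le> c)
          \<or> (0 < h x \<and> h x \<le> 1 \<and> h x \<le> F2hat m (g x) c)}"
      using geninv_char[OF m] geninv_le0 geninv_gt1 by (auto simp: not_le) (smt (verit))+
    also have "\<dots> \<in> sets M" by measurable
    finally show "{x \<in> space M. geninv (F2hat m (g x)) (h x) \<le> c} \<in> sets M" .
  qed
qed

lemma Pihat_unfold:
  "Pihat f w K N (z, xs, \<zeta>, \<zeta>s, us) =
   (\<Sum>s'\<in>{1..K}. w s' * geninv (F2hat (N s') (\<lambda>i. f (xs (s', i)) s' + \<zeta>s (s', i)))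
        (F1hat (N (Sof z)) (\<lambda>i. f (xs (Sof z, i)) (Sof z) + \<zeta>s (Sof z, i)) (us (Sof z)) (f (fst z) (Sof z) + \<zeta>)))"
  by (simp add: Pihat_def Let_def)

lemma comp_meas:
  fixes M :: "'i \<Rightarrow> 'b::topological_space measure"
  assumes "\<And>q. q \<in> I \<Longrightarrow> sets (M q) = sets borel"
  shows "(\<lambda>x. x p) \<in> borel_measurable (PiM I M)"
proof (cases "p \<in> I")
  case True
  have "(\<lambda>x. x p) \<in> measurable (PiM I M) (M p)" using True by (rule measurable_component_singleton)
  moreover have "measurable (PiM I M) (M p) = measurable (PiM I M) borel"
    by (rule measurable_cong_sets[OF refl assms[OF True]])
  ultimately show ?thesis by simp
next
  case False
  have e: "x p = undefined" if "x \<in> space (PiM I M)" for x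
    using that False unfolding space_PiM PiE_def extensional_def by blast
  have "(\<lambda>x. undefined :: 'b) \<in> borel_measurable (PiM I M)" by (rule measurable_const) simp
  moreover have "(\<lambda>x. x p) \<in> borel_measurable (PiM I M) \<longleftrightarrow> (\<lambda>x. undefined :: 'b) \<in> borel_measurable (PiM I M)"
    by (rule measurable_cong) (rule e)
  ultimately show ?thesis by simp
qed

lemma Pihat_meas:
  fixes f :: "'x::topological_space \<Rightarrow> nat \<Rightarrow> real"
  assumes fm: "\<And>k. (\<lambda>x. f x k) \<in> borel_measurable borel"
  assumes X: "\<And>p. (\<lambda>m. X m p) \<in> borel_measurable M" and Z: "\<And>p. (\<lambda>m. Z m p) \<in> borel_measurable M"
    and U: "\<And>k. (\<lambda>m. U m k) \<in> borel_measurable M"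
    and x0: "(\<lambda>m. fst (zz m)) \<in> borel_measurable M" and z0: "z0 \<in> borel_measurable M"
    and S: "(\<lambda>m. Sof (zz m)) \<in> measurable M (count_space UNIV)"
  shows "(\<lambda>m. Pihat f w K N (zz m, X m, z0 m, Z m, U m)) \<in> borel_measurable M"
proof -
  note fm[measurable]
  note [measurable] = X Z U x0 z0
  define G where "G k m = (\<Sum>s'\<in>{1..K}. w s' * geninv (F2hat (N s') (\<lambda>i. f (X m (s', i)) s' + Z m (s', i)))
        (F1hat (N k) (\<lambda>i. f (X m (k, i)) k + Z m (k, i)) (U m k) (f (fst (zz m)) k + z0 m)))" for k m
  have "G k \<in> borel_measurable M" for k unfolding G_def by measurable
  then have "(\<lambda>m. G (Sof (zz m)) m) \<in> borel_measurable M" by (rule measurable_compose_countable[OF _ S])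
  moreover have "(\<lambda>m. Pihat f w K N (zz m, X m, z0 m, Z m, U m)) = (\<lambda>m. G (Sof (zz m)) m)"
    by (rule ext, unfold Pihat_unfold G_def, rule refl)
  ultimately show ?thesis by simp
qed

lemma F2hat_cong: "(\<And>i. i \<in> {m+1..2*m} \<Longrightarrow> ft i = ft' i) \<Longrightarrow> F2hat m ft = F2hat m ft'"
  unfolding F2hat_def by (intro ext arg_cong2[where f="(/)"] sum.cong refl) auto

lemma F1hat_cong: "(\<And>i. i \<in> {1..n} \<Longrightarrow> ft i = ft' i) \<Longrightarrow> F1hat n ft u t = F1hat n ft' u t"
  unfolding F1hat_def by (auto intro!: arg_cong2[where f="(/)"] arg_cong2[where f="(+)"] sum.cong)

lemma Pihat_upd:
  "Pihat f w K N (z, xs((a, 0) := v), \<zeta>, \<zeta>s((a, 0) := v'), us) = Pihat f w K N (z, xs, \<zeta>, \<zeta>s, us)"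
  unfolding Pihat_unfold
proof (intro sum.cong refl arg_cong2[where f="(*)"] arg_cong2[where f=geninv])
  fix s' assume "s' \<in> {1..K}"
  show "F2hat (N s') (\<lambda>i. f ((xs((a, 0) := v)) (s', i)) s' + (\<zeta>s((a, 0) := v')) (s', i)) =
        F2hat (N s') (\<lambda>i. f (xs (s', i)) s' + \<zeta>s (s', i))"
    by (rule F2hat_cong) auto
  show "F1hat (N (Sof z)) (\<lambda>i. f ((xs((a, 0) := v)) (Sof z, i)) (Sof z) + (\<zeta>s((a, 0) := v')) (Sof z, i)) (us (Sof z)) (f (fst z) (Sof z) + \<zeta>) =
        F1hat (N (Sof z)) (\<lambda>i. f (xs (Sof z, i)) (Sof z) + \<zeta>s (Sof z, i)) (us (Sof z)) (f (fst z) (Sof z) + \<zeta>)"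
    by (rule F1hat_cong) auto
qed

lemma Pihat_z: "Pihat f w K N (z, r) = Pihat f w K N ((fst z, Sof z, y), r)"
  by (cases r) (simp add: Pihat_unfold Sof_def)

locale setting =
  fixes P :: "((real ^ 'p) \<times> nat \<times> real) measure"
    and f :: "real ^ 'p \<Rightarrow> nat \<Rightarrow> real"
    and K :: nat and N :: "nat \<Rightarrow> nat" and w :: "nat \<Rightarrow> real" and \<sigma> :: real
  assumes Pprob: "prob_space P"
    and Psets: "sets P = sets (borel \<Otimes>\<^sub>M count_space UNIV \<Otimes>\<^sub>M borel)"
    and Ppos: "\<forall>s\<in>{1..K}. measure P {z \<in> space P. Sof z = s} > 0"
    and fmeas: "(\<lambda>(x, s). f x s) \<in> borel_measurable (borel \<Otimes>\<^sub>M count_space UNIV)"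
    and Npos: "\<forall>s\<in>{1..K}. N s \<ge> 1"
    and sig: "\<sigma> > 0"
begin

interpretation Pp: prob_space P by (rule Pprob)

lemma Pcong: "measurable P M = measurable (borel \<Otimes>\<^sub>M count_space UNIV \<Otimes>\<^sub>M borel) M"
  by (rule measurable_cong_sets[OF Psets refl])

lemma Sof_meas[measurable]: "Sof \<in> measurable P (count_space UNIV)"
proof -
  have "(\<lambda>z. fst (snd z)) \<in> measurable (borel \<Otimes>\<^sub>M count_space UNIV \<Otimes>\<^sub>M borel) (count_space UNIV)"
    by measurable
  then show ?thesis unfolding Sof_def[abs_def] Pcong .
qed

lemma fst_meas[measurable]: "fst \<in> borel_measurable P"
proof -
  have "fst \<in> measurable (borel \<Otimes>\<^sub>M count_space UNIV \<Otimes>\<^sub>M (borel :: real measure)) (borel :: (real^'p) measure)"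
    by measurable
  then show ?thesis unfolding Pcong .
qed

lemma Es_sets: "{z \<in> space P. Sof z = s} \<in> sets P"
  by measurable

lemma fm[measurable]: "(\<lambda>x. f x k) \<in> borel_measurable borel"
proof -
  have "(\<lambda>x. (x, k)) \<in> measurable borel (borel \<Otimes>\<^sub>M count_space UNIV)" by measurable
  from measurable_compose[OF this fmeas] show ?thesis by simp
qed

lemma Ppos_em: "s \<in> {1..K} \<Longrightarrow> emeasure P {z \<in> space P. Sof z = s} \<noteq> 0"
proof -
  assume "s \<in> {1..K}"
  then have "measure P {z \<in> space P. Sof z = s} > 0" using Ppos by blast
  then show ?thesis by (simp add: Pp.emeasure_eq_measure)
qed

lemma Lx_prob: "s \<in> {1..K} \<Longrightarrow> prob_space (lawX_given_S P s)"
  unfolding lawX_given_S_def cond_law_def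
  apply (rule prob_space.prob_space_distr)
   apply (rule prob_space_uniform_measure)
  using Ppos_em Pp.emeasure_finite apply auto[2]
  using measurable_cong_sets[OF sets_uniform_measure refl] by simp

lemma sets_Lx[simp, measurable_cong]: "sets (lawX_given_S P s) = sets borel"
  unfolding lawX_given_S_def cond_law_def by simp

abbreviation "Lx s \<equiv> lawX_given_S P s"
abbreviation "idx \<equiv> samp_idx K N"
abbreviation "PX \<equiv> PiM idx (\<lambda>(s,i). Lx s)"
abbreviation "Us \<equiv> unif (-\<sigma>) \<sigma>"
abbreviation "PZ \<equiv> PiM idx (\<lambda>_. Us)"
abbreviation "PU \<equiv> PiM {1..K} (\<lambda>_. unif 0 (1::real))"
abbreviation "Rest \<equiv> PX \<Otimes>\<^sub>M (Us \<Otimes>\<^sub>M (PZ \<Otimes>\<^sub>M PU))"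
abbreviation "Om \<equiv> Omega P K N \<sigma>"

lemma Om_eq: "Om = P \<Otimes>\<^sub>M Rest"
  by (simp add: Omega_def)

lemma idx_fst: "p \<in> idx \<Longrightarrow> fst p \<in> {1..K}"
  by (auto simp: samp_idx_def)

lemma prob_Us: "prob_space Us" by (rule prob_space_unif) (use sig in simp)
lemma prob_U01: "prob_space (unif 0 (1::real))" by (rule prob_space_unif) simp

lemma prob_PX: "prob_space PX"
  by (rule prob_space_PiM) (auto simp: samp_idx_def intro!: Lx_prob)
lemma prob_PZ: "prob_space PZ"
  by (rule prob_space_PiM) (simp add: prob_Us)
lemma prob_PU: "prob_space PU"
  by (rule prob_space_PiM) (simp add: prob_U01)
lemma prob_Rest: "prob_space Rest"
  by (intro prob_space_pair prob_PX prob_PZ prob_PU prob_Us)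

lemma cmX[measurable]: "(\<lambda>x. x p) \<in> borel_measurable PX"
  by (rule comp_meas) auto
lemma cmZ[measurable]: "(\<lambda>x. x p) \<in> borel_measurable PZ"
  by (rule comp_meas) auto
lemma cmU[measurable]: "(\<lambda>x. x p) \<in> borel_measurable PU"
  by (rule comp_meas) auto

lemma Pihat_meas_Om: "Pihat f w K N \<in> borel_measurable Om"
proof -
  have "(\<lambda>m. Pihat f w K N (fst m, fst (snd m), fst (snd (snd m)), fst (snd (snd (snd m))), snd (snd (snd (snd m)))))
     \<in> borel_measurable (P \<Otimes>\<^sub>M Rest)"
    by (rule Pihat_meas[OF fm]) measurable
  then show ?thesis by (simp add: Om_eq)
qed

lemma Psi_meas: "(\<lambda>(x, r). Pihat f w K N ((x, s, 0), r)) \<in> borel_measurable (borel \<Otimes>\<^sub>M Rest)"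
proof -
  have c: "measurable (borel \<Otimes>\<^sub>M Rest) P = measurable (borel \<Otimes>\<^sub>M Rest) (borel \<Otimes>\<^sub>M count_space UNIV \<Otimes>\<^sub>M borel)"
    by (rule measurable_cong_sets[OF refl Psets])
  have "(\<lambda>m. (fst m, s, 0::real)) \<in> measurable (borel \<Otimes>\<^sub>M Rest) P"
    unfolding c by measurable
  then have "(\<lambda>m. ((fst m, s, 0::real), snd m)) \<in> measurable (borel \<Otimes>\<^sub>M Rest) Om"
    unfolding Om_eq by measurable
  from measurable_compose[OF this Pihat_meas_Om] show ?thesis
    by (simp add: case_prod_beta' comp_def)
qed

lemma S1:
  assumes s: "s \<in> {1..K}" and T: "T \<in> sets borel"
  shows "emeasure (cond_law Om {\<omega> \<in> space Om. Sof (fst \<omega>) = s} (Pihat f w K N)) T =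
    (\<integral>\<^sup>+x. (\<integral>\<^sup>+r. indicator T (Pihat f w K N ((x, s, 0), r)) \<partial>Rest) \<partial>Lx s)"
proof -
  define E' where "E' = {z \<in> space P. Sof z = s}"
  define g where "g x = (\<integral>\<^sup>+r. indicator T (Pihat f w K N ((x, s, 0), r)) \<partial>Rest)" for x
  interpret R: prob_space Rest by (rule prob_Rest)
  interpret PR: pair_prob_space P Rest by unfold_locales
  have E'sets: "E' \<in> sets P" unfolding E'_def by (rule Es_sets)
  have E: "{\<omega> \<in> space Om. Sof (fst \<omega>) = s} = E' \<times> space Rest"
    unfolding Om_eq E'_def by (auto simp: space_pair_measure)
  have Esets: "E' \<times> space Rest \<in> sets Om" unfolding Om_eq using E'sets by (intro pair_measureI sets.top)
  have Pm: "Pihat f w K N \<in> borel_measurable Om" by (rule Pihat_meas_Om)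
  have Tpre: "Pihat f w K N -` T \<inter> space Om \<in> sets Om" using Pm T by (rule measurable_sets)
  have gm: "g \<in> borel_measurable borel"
    unfolding g_def
  proof (rule R.borel_measurable_nn_integral)
    show "(\<lambda>(x, r). indicator T (Pihat f w K N ((x, s, 0), r)) :: ennreal) \<in> borel_measurable (borel \<Otimes>\<^sub>M Rest)"
      using measurable_compose[OF Psi_meas borel_measurable_indicator[OF T]] by (simp add: comp_def case_prod_beta')
  qed
  have "emeasure (cond_law Om {\<omega> \<in> space Om. Sof (fst \<omega>) = s} (Pihat f w K N)) T
      = emeasure (uniform_measure Om (E' \<times> space Rest)) (Pihat f w K N -` T \<inter> space Om)"
    unfolding cond_law_def E using Pm T
    by (subst emeasure_distr) (auto simp: measurable_cong_sets[OF sets_uniform_measure refl])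
  also have "\<dots> = emeasure Om ((E' \<times> space Rest) \<inter> (Pihat f w K N -` T \<inter> space Om)) / emeasure Om (E' \<times> space Rest)"
    by (rule emeasure_uniform_measure[OF Esets Tpre])
  also have "emeasure Om (E' \<times> space Rest) = emeasure P E'"
    unfolding Om_eq using R.emeasure_pair_measure_Times[OF E'sets sets.top[of Rest]] R.emeasure_space_1 by simp
  also have "emeasure Om ((E' \<times> space Rest) \<inter> (Pihat f w K N -` T \<inter> space Om))
      = (\<integral>\<^sup>+z. g (fst z) * indicator E' z \<partial>P)"
  proof -
    have "emeasure Om ((E' \<times> space Rest) \<inter> (Pihat f w K N -` T \<inter> space Om))
        = (\<integral>\<^sup>+\<omega>. indicator ((E' \<times> space Rest) \<inter> (Pihat f w K N -` T \<inter> space Om)) \<omega> \<partial>(P \<Otimes>\<^sub>M Rest))"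
      using Esets Tpre unfolding Om_eq by (simp add: nn_integral_indicator)
    also have "\<dots> = (\<integral>\<^sup>+z. (\<integral>\<^sup>+r. indicator ((E' \<times> space Rest) \<inter> (Pihat f w K N -` T \<inter> space Om)) (z, r) \<partial>Rest) \<partial>P)"
      using Esets Tpre unfolding Om_eq by (intro R.nn_integral_fst[symmetric] borel_measurable_indicator) simp
    also have "\<dots> = (\<integral>\<^sup>+z. g (fst z) * indicator E' z \<partial>P)"
    proof (intro nn_integral_cong)
      fix z assume z: "z \<in> space P"
      show "(\<integral>\<^sup>+r. indicator ((E' \<times> space Rest) \<inter> (Pihat f w K N -` T \<inter> space Om)) (z, r) \<partial>Rest) = g (fst z) * indicator E' z"
      proof (cases "z \<in> E'")
        case True
        then have "Sof z = s" by (simp add: E'_def)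
        then have eqi: "indicator ((E' \<times> space Rest) \<inter> (Pihat f w K N -` T \<inter> space Om)) (z, r) = indicator T (Pihat f w K N ((fst z, s, 0), r))"
          if "r \<in> space Rest" for r
          using True z that Pihat_z[of f w K N z r 0] unfolding Om_eq by (auto simp: space_pair_measure indicator_def)
        have "(\<integral>\<^sup>+r. indicator ((E' \<times> space Rest) \<inter> (Pihat f w K N -` T \<inter> space Om)) (z, r) \<partial>Rest) = g (fst z)"
          unfolding g_def by (rule nn_integral_cong) (rule eqi)
        then show ?thesis using True by simp
      next
        case False
        then show ?thesis by simp
      qed
    qed
    finally show ?thesis .
  qed
  also have "(\<integral>\<^sup>+z. g (fst z) * indicator E' z \<partial>P) / emeasure P E' = (\<integral>\<^sup>+x. g x \<partial>Lx s)"
  proof -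
    have "(\<integral>\<^sup>+x. g x \<partial>Lx s) = (\<integral>\<^sup>+z. g (fst z) \<partial>uniform_measure P E')"
      unfolding lawX_given_S_def cond_law_def E'_def[symmetric] using gm
      by (subst nn_integral_distr) (auto simp: measurable_cong_sets[OF sets_uniform_measure refl])
    also have "\<dots> = (\<integral>\<^sup>+z. g (fst z) * indicator E' z \<partial>P) / emeasure P E'"
      using gm E'sets by (subst nn_integral_uniform_measure) auto
    finally show ?thesis by simp
  qed
  finally show ?thesis unfolding g_def .
qed

definition "Lf s' = Lx (if s' \<in> {1..K} then s' else 1)"
abbreviation "idx0 s \<equiv> insert (s, 0) idx"
abbreviation "X0 s \<equiv> PiM (idx0 s) (\<lambda>p. Lf (fst p))"
abbreviation "Z0 s \<equiv> PiM (idx0 s) (\<lambda>_. Us)"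
abbreviation "W s \<equiv> X0 s \<Otimes>\<^sub>M (Z0 s \<Otimes>\<^sub>M PU)"
definition "Phi s = (\<lambda>(\<omega>, \<eta>, u). Pihat f w K N ((\<omega> (s, 0), s, 0), \<omega>, \<eta> (s, 0), \<eta>, u))"

lemma finite_idx: "finite idx"
proof -
  have "idx \<subseteq> {1..K} \<times> {1..2 * Max (N ` {1..K})}"
  proof (clarsimp simp: samp_idx_def)
    fix a b assume "Suc 0 \<le> a" "a \<le> K" "b \<le> 2 * N a"
    moreover have "N a \<le> Max (N ` {Suc 0..K})" using \<open>Suc 0 \<le> a\<close> \<open>a \<le> K\<close> by (intro Max_ge) auto
    ultimately show "b \<le> 2 * Max (N ` {Suc 0..K})" by linarith
  qed
  then show ?thesis by (rule finite_subset) simp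
qed

lemma notin_idx: "(s, 0) \<notin> idx" by (simp add: samp_idx_def)

lemma Lf_prob: "K \<ge> 1 \<Longrightarrow> prob_space (Lf s')"
  unfolding Lf_def by (rule Lx_prob) auto

lemma sets_Lf[simp, measurable_cong]: "sets (Lf s') = sets borel"
  by (simp add: Lf_def)

lemma PX_eq: "PiM idx (\<lambda>p. Lf (fst p)) = PX"
  by (rule PiM_cong) (auto simp: Lf_def samp_idx_def)

lemma cmX0[measurable]: "(\<lambda>x. x p) \<in> borel_measurable (X0 s)"
  by (rule comp_meas) auto
lemma cmZ0[measurable]: "(\<lambda>x. x p) \<in> borel_measurable (Z0 s)"
  by (rule comp_meas) auto

lemma Pihat_meas2:
  assumes "\<And>p. (\<lambda>m. X m p) \<in> borel_measurable M" and "\<And>p. (\<lambda>m. Z m p) \<in> borel_measurable M"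
    and "\<And>k. (\<lambda>m. U m k) \<in> borel_measurable M"
    and "x0 \<in> borel_measurable M" and "z0 \<in> borel_measurable M"
  shows "(\<lambda>m. Pihat f w K N ((x0 m, s, y0), X m, z0 m, Z m, U m)) \<in> borel_measurable M"
  by (rule Pihat_meas[OF fm assms(1-3)]) (use assms(4,5) in \<open>simp_all add: Sof_def\<close>)

lemma Phi_meas: "Phi s \<in> borel_measurable (W s)"
proof -
  have "(\<lambda>m. Pihat f w K N ((fst m (s, 0), s, 0), fst m, fst (snd m) (s, 0), fst (snd m), snd (snd m))) \<in> borel_measurable (W s)"
    by (rule Pihat_meas2) measurable
  then show ?thesis unfolding Phi_def by (simp add: case_prod_beta')
qed

lemma indPi_meas:
  assumes "\<And>p. (\<lambda>m. X m p) \<in> borel_measurable M" and "\<And>p. (\<lambda>m. Z m p) \<in> borel_measurable M"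
    and "\<And>k. (\<lambda>m. U m k) \<in> borel_measurable M"
    and "x0 \<in> borel_measurable M" and "z0 \<in> borel_measurable M" and T: "T \<in> sets borel"
  shows "(\<lambda>m. indicator T (Pihat f w K N ((x0 m, s, y0), X m, z0 m, Z m, U m)) :: ennreal) \<in> borel_measurable M"
proof -
  have "(\<lambda>m. Pihat f w K N ((x0 m, s, y0), X m, z0 m, Z m, U m)) \<in> borel_measurable M"
    by (rule Pihat_meas2) (fact assms)+
  from measurable_compose[OF this borel_measurable_indicator[OF T]] show ?thesis by (simp add: comp_def)
qed

lemma Phi_unfold: "Phi s (\<omega>, \<eta>, u) = Pihat f w K N ((\<omega> (s, 0), s, 0), \<omega>, \<eta> (s, 0), \<eta>, u)"
  by (simp add: Phi_def)

lemma prod_Lf: "K \<ge> 1 \<Longrightarrow> product_prob_space (\<lambda>p::nat\<times>nat. Lf (fst p))"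
  unfolding product_prob_space_def product_prob_space_axioms_def product_sigma_finite_def
  using Lf_prob by (auto simp: prob_space_imp_sigma_finite)

lemma prod_Us: "product_prob_space (\<lambda>p::nat\<times>nat. Us)"
  unfolding product_prob_space_def product_prob_space_axioms_def product_sigma_finite_def
  using prob_Us by (auto simp: prob_space_imp_sigma_finite)

lemma prob_X0: "K \<ge> 1 \<Longrightarrow> prob_space (X0 s)"
  by (rule prob_space_PiM) (simp add: Lf_prob)
lemma prob_Z0: "prob_space (Z0 s)"
  by (rule prob_space_PiM) (simp add: prob_Us)

lemma Phi_sec_meas:
  assumes T: "T \<in> sets borel"
  shows "(\<lambda>q. indicator T (Phi s (\<omega>, q)) :: ennreal) \<in> borel_measurable (Z0 s \<Otimes>\<^sub>M PU)"
proof -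
  have "(\<lambda>q. indicator T (Pihat f w K N ((\<omega> (s,0), s, 0), \<omega>, fst q (s,0), fst q, snd q)) :: ennreal) \<in> borel_measurable (Z0 s \<Otimes>\<^sub>M PU)"
    by (rule indPi_meas[OF _ _ _ _ _ T]) measurable
  then show ?thesis by (simp add: Phi_def case_prod_beta')
qed

lemma Phi_sec_meas2:
  assumes T: "T \<in> sets borel"
  shows "(\<lambda>u. indicator T (Phi s (\<omega>, \<eta>, u)) :: ennreal) \<in> borel_measurable PU"
proof -
  have "(\<lambda>u. indicator T (Pihat f w K N ((\<omega> (s,0), s, 0), \<omega>, \<eta> (s,0), \<eta>, u)) :: ennreal) \<in> borel_measurable PU"
    by (rule indPi_meas[OF _ _ _ _ _ T]) measurable
  then show ?thesis by (simp add: Phi_def)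
qed

lemma Psi_sec1:
  assumes T: "T \<in> sets borel"
  shows "(\<lambda>q. indicator T (Pihat f w K N ((x, s, 0), xs, z, q)) :: ennreal) \<in> borel_measurable (PZ \<Otimes>\<^sub>M PU)"
proof -
  have "(\<lambda>q. indicator T (Pihat f w K N ((x, s, 0), xs, z, fst q, snd q)) :: ennreal) \<in> borel_measurable (PZ \<Otimes>\<^sub>M PU)"
    by (rule indPi_meas[OF _ _ _ _ _ T]) measurable
  then show ?thesis by simp
qed

lemma Psi_sec2:
  assumes T: "T \<in> sets borel"
  shows "(\<lambda>q. indicator T (Pihat f w K N ((x, s, 0), xs, q)) :: ennreal) \<in> borel_measurable (Us \<Otimes>\<^sub>M (PZ \<Otimes>\<^sub>M PU))"
proof -
  have "(\<lambda>q. indicator T (Pihat f w K N ((x, s, 0), xs, fst q, fst (snd q), snd (snd q))) :: ennreal) \<in> borel_measurable (Us \<Otimes>\<^sub>M (PZ \<Otimes>\<^sub>M PU))"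
    by (rule indPi_meas[OF _ _ _ _ _ T]) measurable
  then show ?thesis by simp
qed

lemma Psi_sec3:
  assumes T: "T \<in> sets borel"
  shows "(\<lambda>q. indicator T (Pihat f w K N ((x, s, 0), q)) :: ennreal) \<in> borel_measurable Rest"
proof -
  have "(\<lambda>q. indicator T (Pihat f w K N ((x, s, 0), fst q, fst (snd q), fst (snd (snd q)), snd (snd (snd q)))) :: ennreal) \<in> borel_measurable Rest"
    by (rule indPi_meas[OF _ _ _ _ _ T]) measurable
  then show ?thesis by simp
qed

lemma S2:
  assumes s: "s \<in> {1..K}" and T: "T \<in> sets borel"
  shows "(\<integral>\<^sup>+x. (\<integral>\<^sup>+r. indicator T (Pihat f w K N ((x, s, 0), r)) \<partial>Rest) \<partial>Lx s) = emeasure (W s) (Phi s -` T \<inter> space (W s))"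
proof -
  have K1: "K \<ge> 1" using s by simp
  interpret PLf: product_prob_space "\<lambda>p::nat\<times>nat. Lf (fst p)" by (rule prod_Lf[OF K1])
  interpret PUs: product_prob_space "\<lambda>p::nat\<times>nat. Us" by (rule prod_Us)
  interpret U: prob_space PU by (rule prob_PU)
  interpret Z0: prob_space "Z0 s" by (rule prob_Z0)
  interpret ZU: prob_space "Z0 s \<Otimes>\<^sub>M PU" by (intro prob_space_pair prob_Z0 prob_PU)
  interpret ZZU: prob_space "PZ \<Otimes>\<^sub>M PU" by (intro prob_space_pair prob_PZ prob_PU)
  interpret UZU: prob_space "Us \<Otimes>\<^sub>M (PZ \<Otimes>\<^sub>M PU)" by (intro prob_space_pair prob_PZ prob_PU prob_Us)
  have fin: "finite idx" by (rule finite_idx)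
  have ni: "(s, 0) \<notin> idx" by (rule notin_idx)
  have Phim: "(\<lambda>m. indicator T (Phi s m) :: ennreal) \<in> borel_measurable (W s)"
    using measurable_compose[OF Phi_meas borel_measurable_indicator[OF T]] by (simp add: comp_def)
  have Pre: "Phi s -` T \<inter> space (W s) \<in> sets (W s)" by (rule measurable_sets[OF Phi_meas T])
  have "emeasure (W s) (Phi s -` T \<inter> space (W s)) = (\<integral>\<^sup>+m. indicator (Phi s -` T \<inter> space (W s)) m \<partial>W s)"
    by (rule nn_integral_indicator[symmetric, OF Pre])
  also have "\<dots> = (\<integral>\<^sup>+m. indicator T (Phi s m) \<partial>W s)"
    by (rule nn_integral_cong) (simp add: indicator_def)
  also have "\<dots> = (\<integral>\<^sup>+\<omega>. (\<integral>\<^sup>+q. indicator T (Phi s (\<omega>, q)) \<partial>(Z0 s \<Otimes>\<^sub>M PU)) \<partial>X0 s)"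
    by (rule ZU.nn_integral_fst[symmetric, OF Phim])
  also have "\<dots> = (\<integral>\<^sup>+x. (\<integral>\<^sup>+xs. (\<integral>\<^sup>+q. indicator T (Phi s (xs((s,0) := x), q)) \<partial>(Z0 s \<Otimes>\<^sub>M PU)) \<partial>PiM idx (\<lambda>p. Lf (fst p))) \<partial>Lf s)"
  proof -
    have m: "(\<lambda>\<omega>. \<integral>\<^sup>+q. indicator T (Phi s (\<omega>, q)) \<partial>(Z0 s \<Otimes>\<^sub>M PU)) \<in> borel_measurable (X0 s)"
      by (rule ZU.borel_measurable_nn_integral) (use Phim in \<open>simp add: case_prod_beta'\<close>)
    show ?thesis using PLf.product_nn_integral_insert_rev[OF fin ni m] by simp
  qed
  also have "\<dots> = (\<integral>\<^sup>+x. (\<integral>\<^sup>+r. indicator T (Pihat f w K N ((x, s, 0), r)) \<partial>Rest) \<partial>Lx s)"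
  proof -
    have Lfs: "Lf s = Lx s" using s by (simp add: Lf_def)
    have inner: "(\<integral>\<^sup>+q. indicator T (Phi s (xs((s,0) := x), q)) \<partial>(Z0 s \<Otimes>\<^sub>M PU)) =
       (\<integral>\<^sup>+r. indicator T (Pihat f w K N ((x, s, 0), xs, r)) \<partial>(Us \<Otimes>\<^sub>M (PZ \<Otimes>\<^sub>M PU)))" for x xs
    proof -
      have "(\<integral>\<^sup>+q. indicator T (Phi s (xs((s,0) := x), q)) \<partial>(Z0 s \<Otimes>\<^sub>M PU)) =
          (\<integral>\<^sup>+\<eta>. (\<integral>\<^sup>+u. indicator T (Phi s (xs((s,0) := x), \<eta>, u)) \<partial>PU) \<partial>Z0 s)"
        by (rule U.nn_integral_fst[symmetric]) (rule Phi_sec_meas[OF T])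
      also have "\<dots> = (\<integral>\<^sup>+\<zeta>. (\<integral>\<^sup>+\<zeta>s. (\<integral>\<^sup>+u. indicator T (Phi s (xs((s,0) := x), \<zeta>s((s,0) := \<zeta>), u)) \<partial>PU) \<partial>PZ) \<partial>Us)"
      proof -
        have m2: "(\<lambda>\<eta>. \<integral>\<^sup>+u. indicator T (Phi s (xs((s,0) := x), \<eta>, u)) \<partial>PU) \<in> borel_measurable (Z0 s)"
          by (rule U.borel_measurable_nn_integral) (use Phi_sec_meas[OF T] in \<open>simp add: case_prod_beta'\<close>)
        show ?thesis using PUs.product_nn_integral_insert_rev[OF fin ni m2] by simp
      qed
      also have "\<dots> = (\<integral>\<^sup>+\<zeta>. (\<integral>\<^sup>+\<zeta>s. (\<integral>\<^sup>+u. indicator T (Pihat f w K N ((x, s, 0), xs, \<zeta>, \<zeta>s, u)) \<partial>PU) \<partial>PZ) \<partial>Us)"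
        by (simp add: Phi_unfold Pihat_upd)
      also have "\<dots> = (\<integral>\<^sup>+\<zeta>. (\<integral>\<^sup>+q. indicator T (Pihat f w K N ((x, s, 0), xs, \<zeta>, q)) \<partial>(PZ \<Otimes>\<^sub>M PU)) \<partial>Us)"
        by (intro nn_integral_cong U.nn_integral_fst) (use Psi_sec1[OF T] in simp)
      also have "\<dots> = (\<integral>\<^sup>+r. indicator T (Pihat f w K N ((x, s, 0), xs, r)) \<partial>(Us \<Otimes>\<^sub>M (PZ \<Otimes>\<^sub>M PU)))"
        by (rule ZZU.nn_integral_fst) (use Psi_sec2[OF T] in simp)
      finally show ?thesis .
    qed
    show ?thesis
      unfolding Lfs PX_eq inner
      by (rule nn_integral_cong, rule UZU.nn_integral_fst, rule Psi_sec3[OF T])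
  qed
  finally show ?thesis by simp
qed

definition "Hh \<omega> \<eta> v = (\<Sum>s'\<in>{1..K}. w s' * geninv (F2hat (N s') (\<lambda>i. f (\<omega> (s', i)) s' + \<eta> (s', i))) v)"
definition "Yf s \<omega> \<eta> i = f (\<omega> (s, i)) s + \<eta> (s, i)"
definition "tj s j p = (if p = (s, 0) then (s, j) else if p = (s, j) then (s, 0) else p)"
definition "tau s j \<omega> = (\<lambda>p\<in>idx0 s. \<omega> (tj s j p))"

lemma tj_in: "j \<le> N s \<Longrightarrow> s \<in> {1..K} \<Longrightarrow> tj s j \<in> idx0 s \<rightarrow> idx0 s"
  using Npos by (auto simp: tj_def samp_idx_def)

lemma tj_inj: "inj_on (tj s j) A"
  unfolding inj_on_def tj_def by auto

lemma fst_tj: "fst (tj s j p) = fst p"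
  by (simp add: tj_def)

lemma tau_meas:
  assumes "j \<le> N s" "s \<in> {1..K}"
  shows "tau s j \<in> measurable (PiM (idx0 s) M) (PiM (idx0 s) (\<lambda>i. M (tj s j i)))"
  unfolding tau_def
  by (rule measurable_restrict) (use tj_in[OF assms] in \<open>auto intro!: measurable_component_singleton\<close>)

lemma distr_tau:
  assumes j: "j \<le> N s" and s: "s \<in> {1..K}" and M: "\<And>p. prob_space (M p)" and Mt: "\<And>p. M (tj s j p) = M p"
  shows "distr (PiM (idx0 s) M) (PiM (idx0 s) M) (tau s j) = PiM (idx0 s) M"
proof -
  have e: "(\<lambda>i. M (tj s j i)) = M" using Mt by auto
  show ?thesis
    using distr_PiM_reindex[of "idx0 s" M "tj s j" "idx0 s", OF M tj_inj tj_in[OF j s]]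
    unfolding e tau_def by simp
qed

lemma distr_W_tau:
  assumes j: "j \<le> N s" and s: "s \<in> {1..K}"
  shows "distr (W s) (W s) (\<lambda>(\<omega>, \<eta>, u). (tau s j \<omega>, tau s j \<eta>, u)) = W s"
proof -
  have K1: "K \<ge> 1" using s by simp
  have tX: "tau s j \<in> measurable (X0 s) (X0 s)" using tau_meas[OF j s, of "\<lambda>p. Lf (fst p)"] by (simp add: fst_tj)
  have tZ: "tau s j \<in> measurable (Z0 s) (Z0 s)" using tau_meas[OF j s, of "\<lambda>p. Us"] by simp
  have dX: "distr (X0 s) (X0 s) (tau s j) = X0 s"
    by (rule distr_tau[OF j s]) (auto simp: Lf_prob[OF K1] fst_tj)
  have dZ: "distr (Z0 s) (Z0 s) (tau s j) = Z0 s"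
    by (rule distr_tau[OF j s]) (auto simp: prob_Us)
  have dU: "distr PU PU (\<lambda>u. u) = PU" by simp
  have sfZ: "sigma_finite_measure (Z0 s)" by (rule prob_space_imp_sigma_finite[OF prob_Z0])
  have sfU: "sigma_finite_measure PU" by (rule prob_space_imp_sigma_finite[OF prob_PU])
  have sfZU: "sigma_finite_measure (Z0 s \<Otimes>\<^sub>M PU)" by (rule prob_space_imp_sigma_finite) (intro prob_space_pair prob_Z0 prob_PU)
  have tZU: "(\<lambda>(\<eta>, u). (tau s j \<eta>, u)) \<in> measurable (Z0 s \<Otimes>\<^sub>M PU) (Z0 s \<Otimes>\<^sub>M PU)"
    using tZ by measurable
  have dZU: "distr (Z0 s \<Otimes>\<^sub>M PU) (Z0 s \<Otimes>\<^sub>M PU) (\<lambda>(\<eta>, u). (tau s j \<eta>, u)) = Z0 s \<Otimes>\<^sub>M PU"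
  proof -
    have "distr (Z0 s) (Z0 s) (tau s j) \<Otimes>\<^sub>M distr PU PU (\<lambda>u. u) = distr (Z0 s \<Otimes>\<^sub>M PU) (Z0 s \<Otimes>\<^sub>M PU) (\<lambda>(x, y). (tau s j x, y))"
      using sfU by (intro pair_measure_distr[OF tZ]) simp_all
    then show ?thesis using dZ dU by simp
  qed
  have "distr (W s) (W s) (\<lambda>(\<omega>, q). (tau s j \<omega>, (\<lambda>(\<eta>, u). (tau s j \<eta>, u)) q)) = W s"
    using pair_measure_distr[OF tX tZU] dX dZU sfZU by simp
  then show ?thesis by (simp add: case_prod_beta')
qed

lemma Phi_tau:
  assumes j: "j \<le> N s" and s: "s \<in> {1..K}"
  shows "Phi s (tau s j \<omega>, tau s j \<eta>, u) = Hh \<omega> \<eta> (rkA (Yf s \<omega> \<eta>) (N s) j (u s))"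
proof -
  have in0: "(s, i) \<in> idx0 s" if "i \<le> 2 * N s" for i
    using that s by (auto simp: samp_idx_def)
  have F1eq: "F1hat (N s) (\<lambda>i. f (tau s j \<omega> (s, i)) s + tau s j \<eta> (s, i)) (u s) (f (tau s j \<omega> (s, 0)) s + tau s j \<eta> (s, 0))
      = rkA (Yf s \<omega> \<eta>) (N s) j (u s)"
  proof -
    have a: "f (tau s j \<omega> (s, 0)) s + tau s j \<eta> (s, 0) = Yf s \<omega> \<eta> j"
      by (simp add: tau_def tj_def Yf_def)
    have b: "F1hat (N s) (\<lambda>i. f (tau s j \<omega> (s, i)) s + tau s j \<eta> (s, i)) (u s) (Yf s \<omega> \<eta> j)
        = F1hat (N s) (\<lambda>i. Yf s \<omega> \<eta> (sw j i)) (u s) (Yf s \<omega> \<eta> j)"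
    proof (rule F1hat_cong)
      fix i assume i: "i \<in> {1..N s}"
      then have "(s, i) \<in> idx0 s" using in0[of i] by simp
      moreover have "tj s j (s, i) = (s, sw j i)" using i by (auto simp: tj_def sw_def)
      ultimately show "f (tau s j \<omega> (s, i)) s + tau s j \<eta> (s, i) = Yf s \<omega> \<eta> (sw j i)"
        by (simp add: tau_def Yf_def)
    qed
    show ?thesis unfolding a b by (rule F1_swap[OF j])
  qed
  have F2eq: "F2hat (N s') (\<lambda>i. f (tau s j \<omega> (s', i)) s' + tau s j \<eta> (s', i)) = F2hat (N s') (\<lambda>i. f (\<omega> (s', i)) s' + \<eta> (s', i))"
    if s': "s' \<in> {1..K}" for s'
  proof (rule F2hat_cong)
    fix i assume i: "i \<in> {N s' + 1..2 * N s'}"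
    have "(s', i) \<in> idx0 s" using i s' by (auto simp: samp_idx_def)
    moreover have "tj s j (s', i) = (s', i)" using i j by (auto simp: tj_def)
    ultimately show "f (tau s j \<omega> (s', i)) s' + tau s j \<eta> (s', i) = f (\<omega> (s', i)) s' + \<eta> (s', i)"
      by (simp add: tau_def)
  qed
  show ?thesis
    unfolding Phi_unfold Pihat_unfold Hh_def
    by (intro sum.cong refl arg_cong2[where f="(*)"] arg_cong2[where f=geninv])
       (simp_all add: Sof_def F2eq F1eq)
qed

lemma tauW_meas:
  assumes j: "j \<le> N s" and s: "s \<in> {1..K}"
  shows "(\<lambda>(\<omega>, \<eta>, u). (tau s j \<omega>, tau s j \<eta>, u)) \<in> measurable (W s) (W s)"
proof -
  have tX[measurable]: "tau s j \<in> measurable (X0 s) (X0 s)" using tau_meas[OF j s, of "\<lambda>p. Lf (fst p)"] by (simp add: fst_tj)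
  have tZ[measurable]: "tau s j \<in> measurable (Z0 s) (Z0 s)" using tau_meas[OF j s, of "\<lambda>p. Us"] by simp
  show ?thesis by measurable
qed

lemma L_exch:
  assumes j: "j \<le> N s" and s: "s \<in> {1..K}" and T: "T \<in> sets borel"
  shows "emeasure (W s) (Phi s -` T \<inter> space (W s)) =
    emeasure (W s) {m \<in> space (W s). Hh (fst m) (fst (snd m)) (rkA (Yf s (fst m) (fst (snd m))) (N s) j (snd (snd m) s)) \<in> T}"
proof -
  let ?t = "\<lambda>(\<omega>, \<eta>, u). (tau s j \<omega>, tau s j \<eta>, u)"
  have Pre: "Phi s -` T \<inter> space (W s) \<in> sets (W s)" by (rule measurable_sets[OF Phi_meas T])
  have "emeasure (W s) (Phi s -` T \<inter> space (W s)) = emeasure (distr (W s) (W s) ?t) (Phi s -` T \<inter> space (W s))"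
    unfolding distr_W_tau[OF j s] ..
  also have "\<dots> = emeasure (W s) (?t -` (Phi s -` T \<inter> space (W s)) \<inter> space (W s))"
    by (rule emeasure_distr[OF tauW_meas[OF j s] Pre])
  also have "?t -` (Phi s -` T \<inter> space (W s)) \<inter> space (W s) =
      {m \<in> space (W s). Hh (fst m) (fst (snd m)) (rkA (Yf s (fst m) (fst (snd m))) (N s) j (snd (snd m) s)) \<in> T}"
  proof -
    have "?t m \<in> space (W s)" if "m \<in> space (W s)" for m
      using measurable_space[OF tauW_meas[OF j s] that] .
    then show ?thesis using Phi_tau[OF j s] by (auto simp: case_prod_beta')
  qed
  finally show ?thesis .
qed

end

context setting
begin

lemma rkA_alt: "rkA Y n j v = ((\<Sum>i\<in>{0..n}. if Y i < Y j then 1 else 0) + v * (\<Sum>i\<in>{0..n}. if Y i = Y j then 1 else 0)) / (real n + 1)"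
  unfolding rkA_def rk_lt_def rk_eq_def by (simp add: sum_ind_card)

lemma Hh_meas:
  assumes [measurable]: "\<And>p. (\<lambda>m. X m p) \<in> borel_measurable M" "\<And>p. (\<lambda>m. Z m p) \<in> borel_measurable M" "V \<in> borel_measurable M"
  shows "(\<lambda>m. Hh (X m) (Z m) (V m)) \<in> borel_measurable M"
  unfolding Hh_def by measurable

lemma rkA_meas:
  assumes [measurable]: "\<And>p. (\<lambda>m. X m p) \<in> borel_measurable M" "\<And>p. (\<lambda>m. Z m p) \<in> borel_measurable M" "V \<in> borel_measurable M"
  shows "(\<lambda>m. rkA (Yf s (X m) (Z m)) n j (V m)) \<in> borel_measurable M"
  unfolding rkA_alt Yf_def by measurable

lemma GH_meas:
  assumes "\<And>p. (\<lambda>m. X m p) \<in> borel_measurable M" "\<And>p. (\<lambda>m. Z m p) \<in> borel_measurable M" "V \<in> borel_measurable M"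
    and T: "T \<in> sets borel"
  shows "(\<lambda>m. indicator T (Hh (X m) (Z m) (V m)) :: ennreal) \<in> borel_measurable M"
proof -
  have "(\<lambda>m. Hh (X m) (Z m) (V m)) \<in> borel_measurable M" by (rule Hh_meas) (fact assms)+
  from measurable_compose[OF this borel_measurable_indicator[OF T]] show ?thesis by (simp add: comp_def)
qed

lemma GR_meas:
  assumes "\<And>p. (\<lambda>m. X m p) \<in> borel_measurable M" "\<And>p. (\<lambda>m. Z m p) \<in> borel_measurable M" "V \<in> borel_measurable M"
    and T: "T \<in> sets borel"
  shows "(\<lambda>m. indicator T (Hh (X m) (Z m) (rkA (Yf s (X m) (Z m)) n j (V m))) :: ennreal) \<in> borel_measurable M"
proof (rule GH_meas[OF _ _ _ T])
  show "(\<lambda>m. rkA (Yf s (X m) (Z m)) n j (V m)) \<in> borel_measurable M" by (rule rkA_meas) (fact assms)+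
qed (fact assms)+

abbreviation "U01 \<equiv> unif 0 (1::real)"
abbreviation "B s \<equiv> X0 s \<Otimes>\<^sub>M (Z0 s \<Otimes>\<^sub>M U01)"

lemma L_sum:
  assumes s: "s \<in> {1..K}" and T: "T \<in> sets borel"
  shows "(\<Sum>j\<in>{0..N s}. emeasure (W s) {m \<in> space (W s). Hh (fst m) (fst (snd m)) (rkA (Yf s (fst m) (fst (snd m))) (N s) j (snd (snd m) s)) \<in> T})
    = (real (N s) + 1) * emeasure (B s) {m \<in> space (B s). Hh (fst m) (fst (snd m)) (snd (snd m)) \<in> T}"
proof -
  let ?n = "N s"
  define G where "G \<omega> \<eta> v = (indicator T (Hh \<omega> \<eta> v) :: ennreal)" for \<omega> \<eta> v
  define R where "R \<omega> \<eta> j v = rkA (Yf s \<omega> \<eta>) ?n j v" for \<omega> \<eta> j v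
  have K1: "K \<ge> 1" using s by simp
  interpret U: prob_space PU by (rule prob_PU)
  interpret U1: prob_space U01 by (rule prob_U01)
  interpret ZU: prob_space "Z0 s \<Otimes>\<^sub>M PU" by (intro prob_space_pair prob_Z0 prob_PU)
  interpret ZU1: prob_space "Z0 s \<Otimes>\<^sub>M U01" by (intro prob_space_pair prob_Z0 prob_U01)
  have mW: "(\<lambda>m. G (fst m) (fst (snd m)) (R (fst m) (fst (snd m)) j (snd (snd m) s))) \<in> borel_measurable (W s)" for j
    unfolding G_def R_def by (rule GR_meas[OF _ _ _ T]) measurable
  have mZU: "(\<lambda>q. G \<omega> (fst q) (R \<omega> (fst q) j (snd q s))) \<in> borel_measurable (Z0 s \<Otimes>\<^sub>M PU)" for \<omega> j
    unfolding G_def R_def by (rule GR_meas[OF _ _ _ T]) measurable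
  have mU: "(\<lambda>u. G \<omega> \<eta> (R \<omega> \<eta> j (u s))) \<in> borel_measurable PU" for \<omega> \<eta> j
    unfolding G_def R_def by (rule GR_meas[OF _ _ _ T]) measurable
  have mV: "(\<lambda>v. G \<omega> \<eta> v) \<in> borel_measurable borel" for \<omega> \<eta>
    unfolding G_def by (rule GH_meas[OF _ _ _ T]) measurable
  have mB: "(\<lambda>m. G (fst m) (fst (snd m)) (snd (snd m))) \<in> borel_measurable (B s)"
    unfolding G_def by (rule GH_meas[OF _ _ _ T]) measurable
  have mZU1: "(\<lambda>q. G \<omega> (fst q) (snd q)) \<in> borel_measurable (Z0 s \<Otimes>\<^sub>M U01)" for \<omega>
    unfolding G_def by (rule GH_meas[OF _ _ _ T]) measurable
  have setW: "{m \<in> space (W s). Hh (fst m) (fst (snd m)) (R (fst m) (fst (snd m)) j (snd (snd m) s)) \<in> T} \<in> sets (W s)" for j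
  proof -
    have "(\<lambda>m. Hh (fst m) (fst (snd m)) (R (fst m) (fst (snd m)) j (snd (snd m) s))) \<in> borel_measurable (W s)"
      unfolding R_def by (rule Hh_meas; (rule rkA_meas)?) measurable
    from measurable_sets[OF this T] show ?thesis by (simp add: vimage_def Int_def conj_commute)
  qed
  have "(\<Sum>j\<in>{0..?n}. emeasure (W s) {m \<in> space (W s). Hh (fst m) (fst (snd m)) (rkA (Yf s (fst m) (fst (snd m))) ?n j (snd (snd m) s)) \<in> T})
      = (\<Sum>j\<in>{0..?n}. \<integral>\<^sup>+m. G (fst m) (fst (snd m)) (R (fst m) (fst (snd m)) j (snd (snd m) s)) \<partial>W s)"
  proof (intro sum.cong refl)
    fix j
    have "emeasure (W s) {m \<in> space (W s). Hh (fst m) (fst (snd m)) (R (fst m) (fst (snd m)) j (snd (snd m) s)) \<in> T}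
        = \<integral>\<^sup>+m. indicator {m \<in> space (W s). Hh (fst m) (fst (snd m)) (R (fst m) (fst (snd m)) j (snd (snd m) s)) \<in> T} m \<partial>W s"
      by (rule nn_integral_indicator[symmetric, OF setW])
    also have "\<dots> = \<integral>\<^sup>+m. G (fst m) (fst (snd m)) (R (fst m) (fst (snd m)) j (snd (snd m) s)) \<partial>W s"
      by (rule nn_integral_cong) (simp add: G_def indicator_def)
    finally show "emeasure (W s) {m \<in> space (W s). Hh (fst m) (fst (snd m)) (rkA (Yf s (fst m) (fst (snd m))) ?n j (snd (snd m) s)) \<in> T}
        = \<integral>\<^sup>+m. G (fst m) (fst (snd m)) (R (fst m) (fst (snd m)) j (snd (snd m) s)) \<partial>W s"
      by (simp add: R_def)
  qed
  also have "\<dots> = \<integral>\<^sup>+m. (\<Sum>j\<in>{0..?n}. G (fst m) (fst (snd m)) (R (fst m) (fst (snd m)) j (snd (snd m) s))) \<partial>W s"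
    by (rule nn_integral_sum[symmetric]) (rule mW)
  also have "\<dots> = \<integral>\<^sup>+\<omega>. (\<integral>\<^sup>+q. (\<Sum>j\<in>{0..?n}. G \<omega> (fst q) (R \<omega> (fst q) j (snd q s))) \<partial>(Z0 s \<Otimes>\<^sub>M PU)) \<partial>X0 s"
  proof -
    have mWs: "(\<lambda>m. (\<Sum>j\<in>{0..?n}. G (fst m) (fst (snd m)) (R (fst m) (fst (snd m)) j (snd (snd m) s)))) \<in> borel_measurable (W s)"
      using mW by (auto intro!: borel_measurable_sum)
    show ?thesis by (subst ZU.nn_integral_fst[OF mWs, symmetric]) simp
  qed
  also have "\<dots> = \<integral>\<^sup>+\<omega>. (\<integral>\<^sup>+\<eta>. (\<Sum>j\<in>{0..?n}. \<integral>\<^sup>+u. G \<omega> \<eta> (R \<omega> \<eta> j (u s)) \<partial>PU) \<partial>Z0 s) \<partial>X0 s"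
  proof (rule nn_integral_cong)
    fix \<omega>
    have "(\<integral>\<^sup>+q. (\<Sum>j\<in>{0..?n}. G \<omega> (fst q) (R \<omega> (fst q) j (snd q s))) \<partial>(Z0 s \<Otimes>\<^sub>M PU))
        = \<integral>\<^sup>+\<eta>. (\<integral>\<^sup>+u. (\<Sum>j\<in>{0..?n}. G \<omega> \<eta> (R \<omega> \<eta> j (u s))) \<partial>PU) \<partial>Z0 s"
    proof -
      have mZs: "(\<lambda>q. (\<Sum>j\<in>{0..?n}. G \<omega> (fst q) (R \<omega> (fst q) j (snd q s)))) \<in> borel_measurable (Z0 s \<Otimes>\<^sub>M PU)"
        using mZU by (auto intro!: borel_measurable_sum)
      show ?thesis by (subst U.nn_integral_fst[OF mZs, symmetric]) simp
    qed
    also have "\<dots> = \<integral>\<^sup>+\<eta>. (\<Sum>j\<in>{0..?n}. \<integral>\<^sup>+u. G \<omega> \<eta> (R \<omega> \<eta> j (u s)) \<partial>PU) \<partial>Z0 s"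
      by (rule nn_integral_cong, rule nn_integral_sum) (rule mU)
    finally show "(\<integral>\<^sup>+q. (\<Sum>j\<in>{0..?n}. G \<omega> (fst q) (R \<omega> (fst q) j (snd q s))) \<partial>(Z0 s \<Otimes>\<^sub>M PU))
        = \<integral>\<^sup>+\<eta>. (\<Sum>j\<in>{0..?n}. \<integral>\<^sup>+u. G \<omega> \<eta> (R \<omega> \<eta> j (u s)) \<partial>PU) \<partial>Z0 s" .
  qed
  also have "\<dots> = \<integral>\<^sup>+\<omega>. (\<integral>\<^sup>+\<eta>. (real ?n + 1) * (\<integral>\<^sup>+v. G \<omega> \<eta> v \<partial>U01) \<partial>Z0 s) \<partial>X0 s"
  proof (intro nn_integral_cong)
    fix \<omega> \<eta>
    define S where "S = (Hh \<omega> \<eta>) -` T"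
    have Ssets: "S \<in> sets borel"
    proof -
      have "(\<lambda>v. Hh \<omega> \<eta> v) \<in> borel_measurable borel" by (rule Hh_meas) measurable
      from measurable_sets[OF this T] show ?thesis by (simp add: S_def)
    qed
    have dU: "distr PU U01 (\<lambda>u. u s) = U01"
      by (rule distr_PiM_component) (use s prob_U01 in auto)
    have comp: "(\<integral>\<^sup>+u. G \<omega> \<eta> (R \<omega> \<eta> j (u s)) \<partial>PU) = emeasure U01 {v. R \<omega> \<eta> j v \<in> S}" for j
    proof -
      have mRj: "(\<lambda>v. G \<omega> \<eta> (R \<omega> \<eta> j v)) \<in> borel_measurable U01"
      proof -
        have "(\<lambda>v. G \<omega> \<eta> (R \<omega> \<eta> j v)) \<in> borel_measurable borel"
          using measurable_compose[OF rkA_measurable mV] unfolding R_def comp_def .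
        then show ?thesis by (subst measurable_cong_sets[OF sets_unif refl])
      qed
      have "(\<integral>\<^sup>+u. G \<omega> \<eta> (R \<omega> \<eta> j (u s)) \<partial>PU) = (\<integral>\<^sup>+v. G \<omega> \<eta> (R \<omega> \<eta> j v) \<partial>distr PU U01 (\<lambda>u. u s))"
        by (rule nn_integral_distr[symmetric]) (use s mRj in \<open>auto simp: dU\<close>)
      also have "\<dots> = (\<integral>\<^sup>+v. indicator {v. R \<omega> \<eta> j v \<in> S} v \<partial>U01)"
        unfolding dU by (rule nn_integral_cong) (simp add: G_def S_def indicator_def)
      also have "\<dots> = emeasure U01 {v. R \<omega> \<eta> j v \<in> S}"
      proof (rule nn_integral_indicator)
        have "(\<lambda>v. R \<omega> \<eta> j v) \<in> borel_measurable borel" unfolding R_def by (rule rkA_measurable)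
        from measurable_sets[OF this Ssets] show "{v. R \<omega> \<eta> j v \<in> S} \<in> sets U01" by (simp add: vimage_def)
      qed
      finally show ?thesis .
    qed
    have "(\<Sum>j\<in>{0..?n}. \<integral>\<^sup>+u. G \<omega> \<eta> (R \<omega> \<eta> j (u s)) \<partial>PU) = (\<Sum>j\<in>{0..?n}. emeasure U01 {v. R \<omega> \<eta> j v \<in> S})"
      by (intro sum.cong refl) (rule comp)
    also have "\<dots> = (real ?n + 1) * emeasure U01 S"
      unfolding R_def by (rule nu_lemma[OF Ssets])
    also have "emeasure U01 S = (\<integral>\<^sup>+v. G \<omega> \<eta> v \<partial>U01)"
    proof -
      have "emeasure U01 S = (\<integral>\<^sup>+v. indicator S v \<partial>U01)" using Ssets by (simp add: nn_integral_indicator)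
      also have "\<dots> = (\<integral>\<^sup>+v. G \<omega> \<eta> v \<partial>U01)" by (rule nn_integral_cong) (simp add: G_def S_def indicator_def)
      finally show ?thesis .
    qed
    finally show "(\<Sum>j\<in>{0..?n}. \<integral>\<^sup>+u. G \<omega> \<eta> (R \<omega> \<eta> j (u s)) \<partial>PU) = (real ?n + 1) * (\<integral>\<^sup>+v. G \<omega> \<eta> v \<partial>U01)" .
  qed
  also have "\<dots> = (real ?n + 1) * \<integral>\<^sup>+\<omega>. (\<integral>\<^sup>+\<eta>. (\<integral>\<^sup>+v. G \<omega> \<eta> v \<partial>U01) \<partial>Z0 s) \<partial>X0 s"
  proof -
    have m1: "(\<lambda>\<omega>. \<integral>\<^sup>+\<eta>. (\<integral>\<^sup>+v. G \<omega> \<eta> v \<partial>U01) \<partial>Z0 s) \<in> borel_measurable (X0 s)"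
    proof -
      have "(\<lambda>\<omega>. \<integral>\<^sup>+q. G \<omega> (fst q) (snd q) \<partial>(Z0 s \<Otimes>\<^sub>M U01)) \<in> borel_measurable (X0 s)"
        by (rule ZU1.borel_measurable_nn_integral) (use mB in \<open>simp add: case_prod_beta'\<close>)
      moreover have "(\<integral>\<^sup>+q. G \<omega> (fst q) (snd q) \<partial>(Z0 s \<Otimes>\<^sub>M U01)) = (\<integral>\<^sup>+\<eta>. (\<integral>\<^sup>+v. G \<omega> \<eta> v \<partial>U01) \<partial>Z0 s)" for \<omega>
        by (subst U1.nn_integral_fst[OF mZU1, symmetric]) simp
      ultimately show ?thesis by simp
    qed
    have m2: "(\<lambda>\<eta>. \<integral>\<^sup>+v. G \<omega> \<eta> v \<partial>U01) \<in> borel_measurable (Z0 s)" for \<omega>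
      by (rule U1.borel_measurable_nn_integral) (use mZU1 in \<open>simp add: case_prod_beta'\<close>)
    show ?thesis
      by (simp add: nn_integral_cmult m1 m2)
  qed
  also have "(\<integral>\<^sup>+\<omega>. (\<integral>\<^sup>+\<eta>. (\<integral>\<^sup>+v. G \<omega> \<eta> v \<partial>U01) \<partial>Z0 s) \<partial>X0 s) = (\<integral>\<^sup>+m. G (fst m) (fst (snd m)) (snd (snd m)) \<partial>B s)"
  proof -
    have "(\<integral>\<^sup>+\<omega>. (\<integral>\<^sup>+\<eta>. (\<integral>\<^sup>+v. G \<omega> \<eta> v \<partial>U01) \<partial>Z0 s) \<partial>X0 s) = (\<integral>\<^sup>+\<omega>. (\<integral>\<^sup>+q. G \<omega> (fst q) (snd q) \<partial>(Z0 s \<Otimes>\<^sub>M U01)) \<partial>X0 s)"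
      by (rule nn_integral_cong) (subst U1.nn_integral_fst[OF mZU1, symmetric], simp)
    also have "\<dots> = (\<integral>\<^sup>+m. G (fst m) (fst (snd m)) (snd (snd m)) \<partial>B s)"
      by (subst ZU1.nn_integral_fst[OF mB, symmetric]) simp
    finally show ?thesis .
  qed
  also have "\<dots> = emeasure (B s) {m \<in> space (B s). Hh (fst m) (fst (snd m)) (snd (snd m)) \<in> T}"
  proof -
    have "(\<lambda>m. Hh (fst m) (fst (snd m)) (snd (snd m))) \<in> borel_measurable (B s)" by (rule Hh_meas) measurable
    from measurable_sets[OF this T] have st: "{m \<in> space (B s). Hh (fst m) (fst (snd m)) (snd (snd m)) \<in> T} \<in> sets (B s)"
      by (simp add: vimage_def Int_def conj_commute)
    have "(\<integral>\<^sup>+m. G (fst m) (fst (snd m)) (snd (snd m)) \<partial>B s) = (\<integral>\<^sup>+m. indicator {m \<in> space (B s). Hh (fst m) (fst (snd m)) (snd (snd m)) \<in> T} m \<partial>B s)"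
      by (rule nn_integral_cong) (simp add: G_def indicator_def)
    also have "\<dots> = emeasure (B s) {m \<in> space (B s). Hh (fst m) (fst (snd m)) (snd (snd m)) \<in> T}"
      by (rule nn_integral_indicator[OF st])
    finally show ?thesis .
  qed
  finally show ?thesis .
qed

lemma L_WB:
  assumes s: "s \<in> {1..K}" and T: "T \<in> sets borel"
  shows "emeasure (W s) (Phi s -` T \<inter> space (W s)) = emeasure (B s) {m \<in> space (B s). Hh (fst m) (fst (snd m)) (snd (snd m)) \<in> T}"
proof -
  let ?n = "N s"
  let ?L = "emeasure (W s) (Phi s -` T \<inter> space (W s))"
  let ?R = "emeasure (B s) {m \<in> space (B s). Hh (fst m) (fst (snd m)) (snd (snd m)) \<in> T}"
  have "ennreal (real ?n + 1) * ?L = (\<Sum>j\<in>{0..?n}. ?L)"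
    by (simp add: ennreal_of_nat_eq_real_of_nat add.commute)
  also have "\<dots> = (\<Sum>j\<in>{0..?n}. emeasure (W s) {m \<in> space (W s). Hh (fst m) (fst (snd m)) (rkA (Yf s (fst m) (fst (snd m))) ?n j (snd (snd m) s)) \<in> T})"
    by (intro sum.cong refl L_exch[OF _ s T]) simp
  also have "\<dots> = ennreal (real ?n + 1) * ?R"
    by (rule L_sum[OF s T])
  finally have "ennreal (real ?n + 1) * ?L = ennreal (real ?n + 1) * ?R" .
  then show ?thesis
    by (subst (asm) ennreal_mult_cancel_left) (auto simp: add_pos_nonneg)
qed

definition "J = {(s', i). s' \<in> {1..K} \<and> i \<in> {N s' + 1..2 * N s'}}"
abbreviation "BJ \<equiv> PiM J (\<lambda>p. Lx (fst p)) \<Otimes>\<^sub>M (PiM J (\<lambda>_. Us) \<Otimes>\<^sub>M U01)"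

lemma cmJX[measurable]: "(\<lambda>x. x p) \<in> borel_measurable (PiM J (\<lambda>p. Lx (fst p)))"
  by (rule comp_meas) auto
lemma cmJZ[measurable]: "(\<lambda>x. x p) \<in> borel_measurable (PiM J (\<lambda>_. Us))"
  by (rule comp_meas) auto

lemma J_sub: "J \<subseteq> idx0 s"
  by (auto simp: J_def samp_idx_def)

lemma Hh_restrict: "Hh (restrict \<omega> J) (restrict \<eta> J) v = Hh \<omega> \<eta> v"
  unfolding Hh_def
  by (intro sum.cong refl arg_cong2[where f="(*)"] arg_cong2[where f=geninv] F2hat_cong) (auto simp: J_def)

lemma L_marg:
  assumes s: "s \<in> {1..K}" and T: "T \<in> sets borel"
  shows "emeasure (B s) {m \<in> space (B s). Hh (fst m) (fst (snd m)) (snd (snd m)) \<in> T} =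
    emeasure BJ {m \<in> space BJ. Hh (fst m) (fst (snd m)) (snd (snd m)) \<in> T}"
proof -
  have K1: "K \<ge> 1" using s by simp
  interpret PLf: product_prob_space "\<lambda>p::nat\<times>nat. Lf (fst p)" by (rule prod_Lf[OF K1])
  interpret PUs: product_prob_space "\<lambda>p::nat\<times>nat. Us" by (rule prod_Us)
  have fin0: "finite (idx0 s)" using finite_idx by simp
  have eqJ: "PiM J (\<lambda>p. Lf (fst p)) = PiM J (\<lambda>p. Lx (fst p))"
    by (rule PiM_cong) (auto simp: J_def Lf_def)
  have rX: "(\<lambda>\<omega>. restrict \<omega> J) \<in> measurable (X0 s) (PiM J (\<lambda>p. Lx (fst p)))"
    unfolding eqJ[symmetric] by (rule measurable_restrict_subset[OF J_sub])
  have rZ: "(\<lambda>\<omega>. restrict \<omega> J) \<in> measurable (Z0 s) (PiM J (\<lambda>_. Us))"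
    by (rule measurable_restrict_subset[OF J_sub])
  have dX: "distr (X0 s) (PiM J (\<lambda>p. Lx (fst p))) (\<lambda>\<omega>. restrict \<omega> J) = PiM J (\<lambda>p. Lx (fst p))"
    using PLf.distr_restrict[OF J_sub fin0] unfolding eqJ by simp
  have dZ: "distr (Z0 s) (PiM J (\<lambda>_. Us)) (\<lambda>\<omega>. restrict \<omega> J) = PiM J (\<lambda>_. Us)"
    using PUs.distr_restrict[OF J_sub fin0] by simp
  have dU: "distr U01 U01 (\<lambda>u. u) = U01" by simp
  have sfU: "sigma_finite_measure U01" by (rule prob_space_imp_sigma_finite[OF prob_U01])
  have sfZJ: "sigma_finite_measure (PiM J (\<lambda>_. Us) \<Otimes>\<^sub>M U01)"
    by (rule prob_space_imp_sigma_finite) (intro prob_space_pair prob_U01 prob_space_PiM prob_Us)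
  have rZU: "(\<lambda>(\<eta>, v). (restrict \<eta> J, v)) \<in> measurable (Z0 s \<Otimes>\<^sub>M U01) (PiM J (\<lambda>_. Us) \<Otimes>\<^sub>M U01)"
    using rZ by measurable
  have dZU: "distr (Z0 s \<Otimes>\<^sub>M U01) (PiM J (\<lambda>_. Us) \<Otimes>\<^sub>M U01) (\<lambda>(\<eta>, v). (restrict \<eta> J, v)) = PiM J (\<lambda>_. Us) \<Otimes>\<^sub>M U01"
  proof -
    have "distr (Z0 s) (PiM J (\<lambda>_. Us)) (\<lambda>\<omega>. restrict \<omega> J) \<Otimes>\<^sub>M distr U01 U01 (\<lambda>u. u) =
        distr (Z0 s \<Otimes>\<^sub>M U01) (PiM J (\<lambda>_. Us) \<Otimes>\<^sub>M U01) (\<lambda>(x, y). (restrict x J, y))"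
      using sfU by (intro pair_measure_distr[OF rZ]) simp_all
    then show ?thesis using dZ dU by simp
  qed
  let ?r = "\<lambda>(\<omega>, q). (restrict \<omega> J, (\<lambda>(\<eta>, v). (restrict \<eta> J, v)) q)"
  have rB: "?r \<in> measurable (B s) BJ"
    using rX rZU by measurable
  have dB: "distr (B s) BJ ?r = BJ"
  proof -
    have "distr (X0 s) (PiM J (\<lambda>p. Lx (fst p))) (\<lambda>\<omega>. restrict \<omega> J) \<Otimes>\<^sub>M distr (Z0 s \<Otimes>\<^sub>M U01) (PiM J (\<lambda>_. Us) \<Otimes>\<^sub>M U01) (\<lambda>(\<eta>, v). (restrict \<eta> J, v))
      = distr (B s) BJ ?r"
      using sfZJ dZU by (intro pair_measure_distr[OF rX rZU]) simp
    then show ?thesis using dX dZU by simp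
  qed
  have setJ: "{m \<in> space BJ. Hh (fst m) (fst (snd m)) (snd (snd m)) \<in> T} \<in> sets BJ"
  proof -
    have "(\<lambda>m. Hh (fst m) (fst (snd m)) (snd (snd m))) \<in> borel_measurable BJ"
      by (rule Hh_meas) measurable
    from measurable_sets[OF this T] show ?thesis by (simp add: vimage_def Int_def conj_commute)
  qed
  have "emeasure BJ {m \<in> space BJ. Hh (fst m) (fst (snd m)) (snd (snd m)) \<in> T}
      = emeasure (distr (B s) BJ ?r) {m \<in> space BJ. Hh (fst m) (fst (snd m)) (snd (snd m)) \<in> T}"
    unfolding dB ..
  also have "\<dots> = emeasure (B s) (?r -` {m \<in> space BJ. Hh (fst m) (fst (snd m)) (snd (snd m)) \<in> T} \<inter> space (B s))"
    by (rule emeasure_distr[OF rB setJ])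
  also have "?r -` {m \<in> space BJ. Hh (fst m) (fst (snd m)) (snd (snd m)) \<in> T} \<inter> space (B s)
      = {m \<in> space (B s). Hh (fst m) (fst (snd m)) (snd (snd m)) \<in> T}"
  proof -
    have "?r m \<in> space BJ" if "m \<in> space (B s)" for m using measurable_space[OF rB that] .
    then show ?thesis by (auto simp: case_prod_beta' Hh_restrict)
  qed
  finally show ?thesis by simp
qed

end

context setting
begin

lemma key:
  assumes s: "s \<in> {1..K}" and T: "T \<in> sets borel"
  shows "emeasure (cond_law (Omega P K N \<sigma>) {\<omega> \<in> space (Omega P K N \<sigma>). Sof (fst \<omega>) = s} (Pihat f w K N)) T =
    emeasure BJ {m \<in> space BJ. Hh (fst m) (fst (snd m)) (snd (snd m)) \<in> T}"
proof -
  note S1[OF s T]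
  also note S2[OF s T]
  also note L_WB[OF s T]
  also note L_marg[OF s T]
  finally show ?thesis .
qed

end

theorem theorem5:
  fixes P :: "((real ^ 'p) \<times> nat \<times> real) measure"
    and f :: "real ^ 'p \<Rightarrow> nat \<Rightarrow> real"
    and K :: nat and N :: "nat \<Rightarrow> nat" and w :: "nat \<Rightarrow> real" and \<sigma> :: real
  assumes "prob_space P"
    and "sets P = sets (borel \<Otimes>\<^sub>M count_space UNIV \<Otimes>\<^sub>M borel)"
    and "measure P {z \<in> space P. Sof z \<in> {1..K}} = 1"
    and "\<forall>s\<in>{1..K}. measure P {z \<in> space P. Sof z = s} > 0"
    and "(\<lambda>(x, s). f x s) \<in> borel_measurable (borel \<Otimes>\<^sub>M count_space UNIV)"
    and "\<forall>s\<in>{1..K}. w s \<ge> 0" and "(\<Sum>s\<in>{1..K}. w s) = 1"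
    and "\<forall>s\<in>{1..K}. N s \<ge> 1"
    and "\<sigma> > 0"
  shows "\<forall>s\<in>{1..K}. \<forall>s'\<in>{1..K}.
     cond_law (Omega P K N \<sigma>) {\<omega> \<in> space (Omega P K N \<sigma>). Sof (fst \<omega>) = s} (Pihat f w K N)
   = cond_law (Omega P K N \<sigma>) {\<omega> \<in> space (Omega P K N \<sigma>). Sof (fst \<omega>) = s'} (Pihat f w K N)"
proof (intro ballI)
  interpret st: setting P f K N w \<sigma>
    using assms(1) assms(2) assms(4) assms(5) assms(8) assms(9) by (rule setting.intro)
  fix s s' assume s: "s \<in> {1..K}" and s': "s' \<in> {1..K}"
  show "cond_law (Omega P K N \<sigma>) {\<omega> \<in> space (Omega P K N \<sigma>). Sof (fst \<omega>) = s} (Pihat f w K N)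
      = cond_law (Omega P K N \<sigma>) {\<omega> \<in> space (Omega P K N \<sigma>). Sof (fst \<omega>) = s'} (Pihat f w K N)"
  proof (rule measure_eqI)
    show "sets (cond_law (Omega P K N \<sigma>) {\<omega> \<in> space (Omega P K N \<sigma>). Sof (fst \<omega>) = s} (Pihat f w K N)) =
        sets (cond_law (Omega P K N \<sigma>) {\<omega> \<in> space (Omega P K N \<sigma>). Sof (fst \<omega>) = s'} (Pihat f w K N))"
      by (simp add: cond_law_def)
    fix T assume "T \<in> sets (cond_law (Omega P K N \<sigma>) {\<omega> \<in> space (Omega P K N \<sigma>). Sof (fst \<omega>) = s} (Pihat f w K N))"
    then have T: "T \<in> sets borel" by (simp add: cond_law_def)
    show "emeasure (cond_law (Omega P K N \<sigma>) {\<omega> \<in> space (Omega P K N \<sigma>). Sof (fst \<omega>) = s} (Pihat f w K N)) T =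
        emeasure (cond_law (Omega P K N \<sigma>) {\<omega> \<in> space (Omega P K N \<sigma>). Sof (fst \<omega>) = s'} (Pihat f w K N)) T"
      using st.key[OF s T] st.key[OF s' T] by (simp only:)
  qed
qed

end
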